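(* Let $A=kQ/I$ with reduced Gröbner–Shirshov basis $\mathcal G$, $W=\mathrm{Tip}(\mathcal G)$, Anick chains $W^{(i)}$, and two-sided Anick resolution $(P_*,d^{\mathcal M})$, all as described in the context. Suppose that for every $n\ge1$ and every $(n-1)$-chain $(w_1,\dots,w_n)\in W^{(n-1)}$, the path $w=w_1\cdots w_n$ does not converge to $u=u_1\cdots u_{n-1}$ for any $(u_1,\dots,u_{n-1})\in W^{(n-2)}$. Then the two-sided Anick resolution $(P_*,d^{\mathcal M})$ is minimal.
   Context: Quiver and order: - $k$ is a field and $Q$ a finite quiver. Paths are written left to right; vertices are paths of length $0$. - $\mathcal B$ is the set of all paths, $\mathcal B_+$ the set of paths of positive length, $Q_0$ the vertices and $Q_1$ the arrows. - Fix an admissible well-order $\prec$ on $\mathcal B$ (a well-order compatible with multiplication). $\mathrm{Tip}(r)$ is the $\prec$-largest path with nonzero coefficient in $r\ne0$. Ideal and Gröbner–Shirshov basis: - $I\subseteq kQ$ is a two-sided ideal contained in the span of paths of length $\ge2$, and $A=kQ/I$. - $\mathrm{Tip}(I)=\{\mathrm{Tip}(r):0\ne r\in I\}$ and $\mathrm{NonTip}(I)=\mathcal B\setminus\mathrm{Tip}(I)$, which is a basis of $A$. - $\mathcal G$ is the reduced Gröbner–Shirshov basis of $I$: $\mathcal G\subseteq I$; $W=\mathrm{Tip}(\mathcal G)$ generates $\langle\mathrm{Tip}(I)\rangle$; each element has tip coefficient $1$ and non-tip part in $\mathrm{span}\,\mathrm{NonTip}(I)$; no element of $W$ is a factor of another.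 Ufnarovskiĭ graph and chains: - The Ufnarovskiĭ graph $Q_W$ has vertices $Q_0\cup Q_1\cup\{$proper right factors of elements of $W\}$. - Its arrows are $e\to x$ ($e\in Q_0$, $x\in Q_1$, $x=ex$), together with $u\to v$ whenever $uv\in\mathcal B\cap\langle\mathrm{Tip}(I)\rangle$ and no proper left factor of $uv$ lies in $\langle\mathrm{Tip}(I)\rangle$. - An $i$-chain ($i\ge0$) is $(v_1,\dots,v_{i+1})\in\mathcal B_+^{i+1}$ such that $e\to v_1\to\cdots\to v_{i+1}$ is a path in $Q_W$ for some $e\in Q_0$. $W^{(i)}$ is the set of $i$-chains and $W^{(-1)}=Q_0$. Reduction and convergence: - For $w,w'\in\mathcal B$, $w$ reduces in one step to $w'$ if there are $u,v\in\mathcal B$ and $f\in I$ with $\mathrm{Tip}(f)\in W$, $w=u\,\mathrm{Tip}(f)\,v$, and $w'=upv$ for some path $p\ne\mathrm{Tip}(f)$ appearing with nonzero coefficient in $f$. - $w$ converges to $w'$ if there is a finite sequence of one or more reduction steps $w\Rightarrow u_1\Rightarrow\cdots\Rightarrow u_m\Rightarrow w'$ with $u_1,\dots,u_m\in\mathcal B$. Bar resolution and the quiver $\overline{Q_B}$: - $E=\bigoplus_{e\in Q_0}ke$, $A_+=\mathrm{span}(\mathrm{NonTip}(I)\setminus Q_0)$, $A^e=A\otimes_kA^{op}$. - The reduced bar resolution $B(A,A)_n=A\otimes_EA_+^{\otimes_En}\otimes_EA$ has differential $$d[a_1|\cdots|a_n]=a_1[a_2|\cdots|a_n]+\sum_{i=1}^{n-1}(-1)^i[\cdots|a_ia_{i+1}|\cdots]+(-1)^n[a_1|\cdots|a_{n-1}]a_n.$$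 It decomposes as $\bigoplus A^e\cdot[w_1|\cdots|w_n]$ over sequences of elements $w_i\in\mathrm{NonTip}(I)\setminus Q_0$ with $w_1\cdots w_n$ a path. - The weighted quiver $\overline{Q_B}$ has these sequences as vertices, with degree-$0$ vertices $Q_0$. - From $(w_1,\dots,w_n)$ there is an arrow $d_n^0$ to $(w_2,\dots,w_n)$ of weight $w_1\otimes1$. - For $1\le i\le n-1$ and each term $\lambda_ju_j$ of the normal form $w_iw_{i+1}\equiv\sum_j\lambda_ju_j \bmod I$ (distinct $u_j\in\mathrm{NonTip}(I)\setminus Q_0$, $\lambda_j\ne0$), there is an arrow $d_n^i$ to $(w_1,\dots,w_{i-1},u_j,w_{i+2},\dots,w_n)$ of weight $(-1)^i\lambda_j\otimes1$. - There is an arrow $d_n^n$ to $(w_1,\dots,w_{n-1})$ of weight $(-1)^n1\otimes w_n$. - Here $a\otimes b$ denotes the $A^e$-map sending the source generator to $a\cdot(\text{target generator})\cdot b$. The matching $\mathcal M$ and $\overline{Q_B}^{\mathcal M}$: - For $w\in\mathcal B$, $V_{w,i}$ is the set of vertices $(w_1,\dots,w_n)$ with $w_1\cdots w_n=w$ and $i\ge -1$ maximal such that $(w_1,\dots,w_{i+1})$ is an $i$-chain. - $\mathcal M$ is the set of arrows $(w_1,\dots,w_{i+1},w'_{i+2},w''_{i+2},w_{i+3},\dots,w_n)\to(w_1,\dots,w_n)$ with $(w_1,\dots,w_n)\in V_{w,i}$, $w'_{i+2}w''_{i+2}=w_{i+2}$ (both of positive length), and source in $V_{w,i+1}$. - $\overline{Q_B}^{\mathcal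 M}$ is obtained by replacing each arrow of $\mathcal M$ of weight $\phi$ by a reversed dotted arrow of weight $-\phi^{-1}$; the other arrows are called thick. A zigzag path alternates dotted and thick arrows. The two-sided Anick resolution: - $P_n=A\otimes_EkW^{(n-1)}\otimes_EA\cong\bigoplus_{(w_1,\dots,w_n)\in W^{(n-1)}}A^e\cdot[w_1|\cdots|w_n]$. - The component of $d^{\mathcal M}_n$ from the summand of an $(n-1)$-chain to that of an $(n-2)$-chain is the sum, over all zigzag paths in $\overline{Q_B}^{\mathcal M}$ between them, of the composites of the arrow weights. - It is a resolution of $A$ by projective $A$-bimodules, augmented by multiplication $P_0=A\otimes_EA\to A$. Minimality: a projective bimodule resolution $(P_*,d_* )$ of an $A$-bimodule is minimal if the induced maps $1\otimes d_*\otimes1:E\otimes_AP_*\otimes_AE\to E\otimes_AP_{*-1}\otimes_AE$ are all zero. *)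

theory Defs
  imports Main
begin

section \<open>Quivers and paths\<close>

record ('v,'a) quiver =
  verts :: "'v set"
  arrs  :: "'a set"
  src   :: "'a \<Rightarrow> 'v"
  tgt   :: "'a \<Rightarrow> 'v"

definition finite_quiver :: "('v,'a) quiver \<Rightarrow> bool" where
  "finite_quiver Q \<longleftrightarrow> finite (verts Q) \<and> finite (arrs Q) \<and>
     (\<forall>a\<in>arrs Q. src Q a \<in> verts Q \<and> tgt Q a \<in> verts Q)"

text \<open>A path is a start vertex together with a list of arrows, written left to right.
  Vertices are the paths with empty arrow list.\<close>
type_synonym ('v,'a) path = "'v \<times> 'a list"

fun composable :: "('v,'a) quiver \<Rightarrow> 'v \<Rightarrow> 'a list \<Rightarrow> bool" where
  "composable Q v [] = True"
| "composable Q v (a # as) = (a \<in> arrs Q \<and> src Q a = v \<and> composable Q (tgt Q a) as)"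

definition paths :: "('v,'a) quiver \<Rightarrow> ('v,'a) path set" where
  "paths Q = {(v, as). v \<in> verts Q \<and> composable Q v as}"

definition plen :: "('v,'a) path \<Rightarrow> nat" where
  "plen p = length (snd p)"

definition pend :: "('v,'a) quiver \<Rightarrow> ('v,'a) path \<Rightarrow> 'v" where
  "pend Q p = (if snd p = [] then fst p else tgt Q (last (snd p)))"

text \<open>Concatenation (only meaningful when the end of the first is the start of the second).\<close>
definition pmult :: "('v,'a) path \<Rightarrow> ('v,'a) path \<Rightarrow> ('v,'a) path" where
  "pmult p q = (fst p, snd p @ snd q)"

definition vpath :: "'v \<Rightarrow> ('v,'a) path" where
  "vpath e = (e, [])"

definition apath :: "('v,'a) quiver \<Rightarrow> 'a \<Rightarrow> ('v,'a) path" where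
  "apath Q a = (src Q a, [a])"

definition is_factor :: "('v,'a) quiver \<Rightarrow> ('v,'a) path \<Rightarrow> ('v,'a) path \<Rightarrow> bool" where
  "is_factor Q p w \<longleftrightarrow> p \<in> paths Q \<and> w \<in> paths Q \<and>
     (\<exists>u v. u \<in> paths Q \<and> v \<in> paths Q \<and> pend Q u = fst p \<and> pend Q p = fst v \<and>
            w = pmult (pmult u p) v)"

definition is_left_factor :: "('v,'a) quiver \<Rightarrow> ('v,'a) path \<Rightarrow> ('v,'a) path \<Rightarrow> bool" where
  "is_left_factor Q p w \<longleftrightarrow> p \<in> paths Q \<and> w \<in> paths Q \<and>
     (\<exists>v. v \<in> paths Q \<and> pend Q p = fst v \<and> w = pmult p v)"

definition is_right_factor :: "('v,'a) quiver \<Rightarrow> ('v,'a) path \<Rightarrow> ('v,'a) path \<Rightarrow> bool" where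
  "is_right_factor Q p w \<longleftrightarrow> p \<in> paths Q \<and> w \<in> paths Q \<and>
     (\<exists>u. u \<in> paths Q \<and> pend Q u = fst p \<and> w = pmult u p)"

section \<open>The path algebra kQ\<close>

definition supp :: "(('v,'a) path \<Rightarrow> 'k::zero) \<Rightarrow> ('v,'a) path set" where
  "supp f = {p. f p \<noteq> 0}"

definition kQ :: "('v,'a) quiver \<Rightarrow> (('v,'a) path \<Rightarrow> 'k::zero) set" where
  "kQ Q = {f. finite (supp f) \<and> supp f \<subseteq> paths Q}"

definition pelem :: "('v,'a) path \<Rightarrow> ('v,'a) path \<Rightarrow> 'k::{zero,one}" where
  "pelem p = (\<lambda>q. if q = p then 1 else 0)"

definition lpart :: "('v,'a) path \<Rightarrow> nat \<Rightarrow> ('v,'a) path" where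
  "lpart w i = (fst w, take i (snd w))"

definition rpart :: "('v,'a) quiver \<Rightarrow> ('v,'a) path \<Rightarrow> nat \<Rightarrow> ('v,'a) path" where
  "rpart Q w i = (pend Q (lpart w i), drop i (snd w))"

definition kmult :: "('v,'a) quiver \<Rightarrow> (('v,'a) path \<Rightarrow> 'k::comm_ring_1)
     \<Rightarrow> (('v,'a) path \<Rightarrow> 'k) \<Rightarrow> ('v,'a) path \<Rightarrow> 'k" where
  "kmult Q f g = (\<lambda>w. if w \<in> paths Q
      then (\<Sum>i\<in>{0..plen w}. f (lpart w i) * g (rpart Q w i)) else 0)"

definition two_sided_ideal :: "('v,'a) quiver \<Rightarrow> (('v,'a) path \<Rightarrow> 'k::field) set \<Rightarrow> bool" where
  "two_sided_ideal Q I \<longleftrightarrow> I \<subseteq> kQ Q \<and> (\<lambda>_. 0) \<in> I \<and>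
     (\<forall>f\<in>I. \<forall>g\<in>I. (\<lambda>p. f p + g p) \<in> I) \<and>
     (\<forall>c. \<forall>f\<in>I. (\<lambda>p. c * f p) \<in> I) \<and>
     (\<forall>f\<in>I. \<forall>h\<in>kQ Q. kmult Q h f \<in> I \<and> kmult Q f h \<in> I)"

definition ideal_in_len2 :: "(('v,'a) path \<Rightarrow> 'k::zero) set \<Rightarrow> bool" where
  "ideal_in_len2 I \<longleftrightarrow> (\<forall>f\<in>I. \<forall>p\<in>supp f. plen p \<ge> 2)"

section \<open>Admissible orders, tips, normal forms\<close>

definition admissible_order ::
  "('v,'a) quiver \<Rightarrow> (('v,'a) path \<Rightarrow> ('v,'a) path \<Rightarrow> bool) \<Rightarrow> bool" where
  "admissible_order Q lt \<longleftrightarrow>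
     (\<forall>p\<in>paths Q. \<not> lt p p) \<and>
     (\<forall>p\<in>paths Q. \<forall>q\<in>paths Q. \<forall>r\<in>paths Q. lt p q \<longrightarrow> lt q r \<longrightarrow> lt p r) \<and>
     (\<forall>p\<in>paths Q. \<forall>q\<in>paths Q. p \<noteq> q \<longrightarrow> lt p q \<or> lt q p) \<and>
     wf {(p, q). p \<in> paths Q \<and> q \<in> paths Q \<and> lt p q} \<and>
     (\<forall>p\<in>paths Q. \<forall>q\<in>paths Q. \<forall>r\<in>paths Q.
        lt p q \<longrightarrow> pend Q p = fst r \<longrightarrow> pend Q q = fst r \<longrightarrow> lt (pmult p r) (pmult q r)) \<and>
     (\<forall>p\<in>paths Q. \<forall>q\<in>paths Q. \<forall>r\<in>paths Q.
        lt p q \<longrightarrow> pend Q r = fst p \<longrightarrow> pend Q r = fst q \<longrightarrow> lt (pmult r p) (pmult r q)) \<and>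
     (\<forall>p w. is_factor Q p w \<longrightarrow> p = w \<or> lt p w)"

definition Tip :: "(('v,'a) path \<Rightarrow> ('v,'a) path \<Rightarrow> bool) \<Rightarrow> (('v,'a) path \<Rightarrow> 'k::zero)
     \<Rightarrow> ('v,'a) path" where
  "Tip lt r = (THE t. t \<in> supp r \<and> (\<forall>s\<in>supp r. s \<noteq> t \<longrightarrow> lt s t))"

definition TipI :: "(('v,'a) path \<Rightarrow> ('v,'a) path \<Rightarrow> bool) \<Rightarrow> (('v,'a) path \<Rightarrow> 'k::zero) set
     \<Rightarrow> ('v,'a) path set" where
  "TipI lt I = {Tip lt r | r. r \<in> I \<and> r \<noteq> (\<lambda>_. 0)}"

definition NonTip :: "('v,'a) quiver \<Rightarrow> (('v,'a) path \<Rightarrow> ('v,'a) path \<Rightarrow> bool)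
     \<Rightarrow> (('v,'a) path \<Rightarrow> 'k::zero) set \<Rightarrow> ('v,'a) path set" where
  "NonTip Q lt I = paths Q - TipI lt I"

text \<open>Paths lying in the ideal generated by Tip(I), i.e. having a factor in Tip(I).\<close>
definition in_tip_ideal :: "('v,'a) quiver \<Rightarrow> (('v,'a) path \<Rightarrow> ('v,'a) path \<Rightarrow> bool)
     \<Rightarrow> (('v,'a) path \<Rightarrow> 'k::zero) set \<Rightarrow> ('v,'a) path \<Rightarrow> bool" where
  "in_tip_ideal Q lt I w \<longleftrightarrow> (\<exists>t\<in>TipI lt I. is_factor Q t w)"

definition NF :: "('v,'a) quiver \<Rightarrow> (('v,'a) path \<Rightarrow> ('v,'a) path \<Rightarrow> bool)
     \<Rightarrow> (('v,'a) path \<Rightarrow> 'k::field) set \<Rightarrow> (('v,'a) path \<Rightarrow> 'k) \<Rightarrow> ('v,'a) path \<Rightarrow> 'k" where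
  "NF Q lt I x = (THE y. y \<in> kQ Q \<and> supp y \<subseteq> NonTip Q lt I \<and> (\<lambda>p. x p - y p) \<in> I)"

text \<open>Multiplication and unit in A = kQ/I (elements represented in normal form).\<close>
definition amult :: "('v,'a) quiver \<Rightarrow> (('v,'a) path \<Rightarrow> ('v,'a) path \<Rightarrow> bool)
     \<Rightarrow> (('v,'a) path \<Rightarrow> 'k::field) set \<Rightarrow> (('v,'a) path \<Rightarrow> 'k) \<Rightarrow> (('v,'a) path \<Rightarrow> 'k)
     \<Rightarrow> ('v,'a) path \<Rightarrow> 'k" where
  "amult Q lt I a b = NF Q lt I (kmult Q a b)"

definition aone :: "('v,'a) quiver \<Rightarrow> ('v,'a) path \<Rightarrow> 'k::{zero,one}" where
  "aone Q = (\<lambda>p. if p \<in> vpath ` verts Q then 1 else 0)"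

definition reduced_GSB :: "('v,'a) quiver \<Rightarrow> (('v,'a) path \<Rightarrow> ('v,'a) path \<Rightarrow> bool)
     \<Rightarrow> (('v,'a) path \<Rightarrow> 'k::field) set \<Rightarrow> (('v,'a) path \<Rightarrow> 'k) set \<Rightarrow> bool" where
  "reduced_GSB Q lt I G \<longleftrightarrow> G \<subseteq> I \<and>
     (\<forall>g\<in>G. g \<noteq> (\<lambda>_. 0) \<and> g (Tip lt g) = 1 \<and>
        (\<forall>p\<in>supp g. p \<noteq> Tip lt g \<longrightarrow> p \<in> NonTip Q lt I)) \<and>
     (\<forall>t\<in>TipI lt I. \<exists>w\<in>Tip lt ` G. is_factor Q w t) \<and>
     (\<forall>w\<in>Tip lt ` G. \<forall>w'\<in>Tip lt ` G. w \<noteq> w' \<longrightarrow> \<not> is_factor Q w w')"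

section \<open>Ufnarovskii graph and Anick chains\<close>

text \<open>Non-vertex vertices of the Ufnarovskii graph Q_W (W = Tip(G)).\<close>
definition uf_verts :: "('v,'a) quiver \<Rightarrow> ('v,'a) path set \<Rightarrow> ('v,'a) path set" where
  "uf_verts Q W = apath Q ` arrs Q \<union>
     {p. \<exists>w\<in>W. is_right_factor Q p w \<and> p \<noteq> w}"

definition uf_edge :: "('v,'a) quiver \<Rightarrow> (('v,'a) path \<Rightarrow> ('v,'a) path \<Rightarrow> bool)
     \<Rightarrow> (('v,'a) path \<Rightarrow> 'k::zero) set \<Rightarrow> ('v,'a) path set
     \<Rightarrow> ('v,'a) path \<Rightarrow> ('v,'a) path \<Rightarrow> bool" where
  "uf_edge Q lt I W u v \<longleftrightarrow> u \<in> uf_verts Q W \<and> v \<in> uf_verts Q W \<and>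
     pend Q u = fst v \<and> in_tip_ideal Q lt I (pmult u v) \<and>
     \<not> (\<exists>p. is_left_factor Q p (pmult u v) \<and> p \<noteq> pmult u v \<and> in_tip_ideal Q lt I p)"

text \<open>A list [v_1,...,v_{i+1}] is an i-chain: e \<rightarrow> v_1 \<rightarrow> ... \<rightarrow> v_{i+1} in Q_W.\<close>
definition is_chain :: "('v,'a) quiver \<Rightarrow> (('v,'a) path \<Rightarrow> ('v,'a) path \<Rightarrow> bool)
     \<Rightarrow> (('v,'a) path \<Rightarrow> 'k::zero) set \<Rightarrow> ('v,'a) path set \<Rightarrow> ('v,'a) path list \<Rightarrow> bool" where
  "is_chain Q lt I W vs \<longleftrightarrow> vs \<noteq> [] \<and>
     (\<forall>v\<in>set vs. v \<in> paths Q \<and> plen v > 0) \<and>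
     hd vs \<in> apath Q ` arrs Q \<and>
     (\<forall>j. Suc j < length vs \<longrightarrow> uf_edge Q lt I W (vs ! j) (vs ! Suc j))"

section \<open>The quiver of the reduced bar resolution\<close>

text \<open>A vertex of Q_B is (e, [w_1,...,w_n]); e is the start vertex (for n = 0 it is the
  degree-0 vertex e \<in> Q_0).\<close>
type_synonym ('v,'a) bvert = "'v \<times> ('v,'a) path list"

fun seq_comp :: "('v,'a) quiver \<Rightarrow> 'v \<Rightarrow> ('v,'a) path list \<Rightarrow> bool" where
  "seq_comp Q e [] = True"
| "seq_comp Q e (w # ws) = (fst w = e \<and> seq_comp Q (pend Q w) ws)"

definition seq_end :: "('v,'a) quiver \<Rightarrow> ('v,'a) bvert \<Rightarrow> 'v" where
  "seq_end Q c = (if snd c = [] then fst c else pend Q (last (snd c)))"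

definition seq_prod :: "('v,'a) bvert \<Rightarrow> ('v,'a) path" where
  "seq_prod c = (fst c, concat (map snd (snd c)))"

definition bverts :: "('v,'a) quiver \<Rightarrow> (('v,'a) path \<Rightarrow> ('v,'a) path \<Rightarrow> bool)
     \<Rightarrow> (('v,'a) path \<Rightarrow> 'k::zero) set \<Rightarrow> ('v,'a) bvert set" where
  "bverts Q lt I = {(e, ws). e \<in> verts Q \<and>
      (\<forall>w\<in>set ws. w \<in> NonTip Q lt I \<and> plen w > 0) \<and> seq_comp Q e ws}"

text \<open>Arrows of Q_B: (source, i, target) stands for an arrow d_n^i.\<close>
type_synonym ('v,'a) barrow = "('v,'a) bvert \<times> nat \<times> ('v,'a) bvert"

definition barrows :: "('v,'a) quiver \<Rightarrow> (('v,'a) path \<Rightarrow> ('v,'a) path \<Rightarrow> bool)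
     \<Rightarrow> (('v,'a) path \<Rightarrow> 'k::field) set \<Rightarrow> ('v,'a) barrow set" where
  "barrows Q lt I = {(s, i, t). s \<in> bverts Q lt I \<and> snd s \<noteq> [] \<and>
     ((i = 0 \<and> t = (pend Q (hd (snd s)), tl (snd s))) \<or>
      (1 \<le> i \<and> i < length (snd s) \<and>
        (\<exists>u. u \<in> supp (NF Q lt I (pelem (pmult (snd s ! (i - 1)) (snd s ! i)) :: _ \<Rightarrow> 'k))
             \<and> plen u > 0 \<and>
             t = (fst s, take (i - 1) (snd s) @ [u] @ drop (Suc i) (snd s)))) \<or>
      (i = length (snd s) \<and> t = (fst s, butlast (snd s))))}"

definition mid_scalar :: "('v,'a) quiver \<Rightarrow> (('v,'a) path \<Rightarrow> ('v,'a) path \<Rightarrow> bool)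
     \<Rightarrow> (('v,'a) path \<Rightarrow> 'k::field) set \<Rightarrow> ('v,'a) barrow \<Rightarrow> 'k" where
  "mid_scalar Q lt I x = (case x of (s, i, t) \<Rightarrow>
     (-1) ^ i * NF Q lt I (pelem (pmult (snd s ! (i - 1)) (snd s ! i))) (snd t ! (i - 1)))"

text \<open>Weights: a pair (a, b) stands for the A^e-map a \<otimes> b.\<close>
definition bweight :: "('v,'a) quiver \<Rightarrow> (('v,'a) path \<Rightarrow> ('v,'a) path \<Rightarrow> bool)
     \<Rightarrow> (('v,'a) path \<Rightarrow> 'k::field) set \<Rightarrow> ('v,'a) barrow
     \<Rightarrow> (('v,'a) path \<Rightarrow> 'k) \<times> (('v,'a) path \<Rightarrow> 'k)" where
  "bweight Q lt I x = (case x of (s, i, t) \<Rightarrow>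
     (if i = 0 then (pelem (hd (snd s)), aone Q)
      else if i = length (snd s) then ((\<lambda>p. (-1) ^ i * aone Q p), pelem (last (snd s)))
      else ((\<lambda>p. mid_scalar Q lt I x * aone Q p), aone Q)))"

section \<open>The matching and zigzag paths\<close>

text \<open>Length m of the longest prefix which is an (m-1)-chain (m = i+1 in the paper's V_{w,i}).\<close>
definition chainlen :: "('v,'a) quiver \<Rightarrow> (('v,'a) path \<Rightarrow> ('v,'a) path \<Rightarrow> bool)
     \<Rightarrow> (('v,'a) path \<Rightarrow> 'k::zero) set \<Rightarrow> ('v,'a) path set \<Rightarrow> ('v,'a) bvert \<Rightarrow> nat" where
  "chainlen Q lt I W c = Max {m. m \<le> length (snd c) \<and>
      (m = 0 \<or> is_chain Q lt I W (take m (snd c)))}"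

definition matching :: "('v,'a) quiver \<Rightarrow> (('v,'a) path \<Rightarrow> ('v,'a) path \<Rightarrow> bool)
     \<Rightarrow> (('v,'a) path \<Rightarrow> 'k::field) set \<Rightarrow> ('v,'a) path set \<Rightarrow> ('v,'a) barrow set" where
  "matching Q lt I W = {(s, i, t). (s, i, t) \<in> barrows Q lt I \<and>
     t \<in> bverts Q lt I \<and>
     (let m = chainlen Q lt I W t in
        i = Suc m \<and> m < length (snd t) \<and> chainlen Q lt I W s = Suc m \<and>
        (\<exists>w' w''. plen w' > 0 \<and> plen w'' > 0 \<and> pend Q w' = fst w'' \<and>
           pmult w' w'' = snd t ! m \<and>
           s = (fst t, take m (snd t) @ [w', w''] @ drop (Suc m) (snd t))))}"

text \<open>Edges of Q_B^M: (True, x) is the thick arrow x; (False, x) is the dotted arrow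
  reversing the matched arrow x.\<close>
type_synonym ('v,'a) medge = "bool \<times> ('v,'a) barrow"

definition medge_src :: "('v,'a) medge \<Rightarrow> ('v,'a) bvert" where
  "medge_src e = (case e of (True, (s, i, t)) \<Rightarrow> s | (False, (s, i, t)) \<Rightarrow> t)"

definition medge_tgt :: "('v,'a) medge \<Rightarrow> ('v,'a) bvert" where
  "medge_tgt e = (case e of (True, (s, i, t)) \<Rightarrow> t | (False, (s, i, t)) \<Rightarrow> s)"

text \<open>Weight of a dotted arrow: -\<phi>^{-1}, where \<phi> = \<lambda> (1 \<otimes> 1) is the (scalar) weight of the
  matched arrow.\<close>
definition medge_weight :: "('v,'a) quiver \<Rightarrow> (('v,'a) path \<Rightarrow> ('v,'a) path \<Rightarrow> bool)
     \<Rightarrow> (('v,'a) path \<Rightarrow> 'k::field) set \<Rightarrow> ('v,'a) medge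
     \<Rightarrow> (('v,'a) path \<Rightarrow> 'k) \<times> (('v,'a) path \<Rightarrow> 'k)" where
  "medge_weight Q lt I e = (if fst e then bweight Q lt I (snd e)
      else ((\<lambda>p. - inverse (mid_scalar Q lt I (snd e)) * aone Q p), aone Q))"

definition zigzag_paths :: "('v,'a) quiver \<Rightarrow> (('v,'a) path \<Rightarrow> ('v,'a) path \<Rightarrow> bool)
     \<Rightarrow> (('v,'a) path \<Rightarrow> 'k::field) set \<Rightarrow> ('v,'a) path set \<Rightarrow> ('v,'a) bvert \<Rightarrow> ('v,'a) bvert
     \<Rightarrow> ('v,'a) medge list set" where
  "zigzag_paths Q lt I W c c' = {es. odd (length es) \<and>
     (\<forall>j<length es. (even j \<longrightarrow> fst (es ! j) \<and> snd (es ! j) \<in> barrows Q lt I - matching Q lt I W) \<and>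
                    (odd j \<longrightarrow> \<not> fst (es ! j) \<and> snd (es ! j) \<in> matching Q lt I W)) \<and>
     medge_src (hd es) = c \<and> medge_tgt (last es) = c' \<and>
     (\<forall>j. Suc j < length es \<longrightarrow> medge_tgt (es ! j) = medge_src (es ! Suc j))}"

definition path_weight :: "('v,'a) quiver \<Rightarrow> (('v,'a) path \<Rightarrow> ('v,'a) path \<Rightarrow> bool)
     \<Rightarrow> (('v,'a) path \<Rightarrow> 'k::field) set \<Rightarrow> ('v,'a) medge list
     \<Rightarrow> (('v,'a) path \<Rightarrow> 'k) \<times> (('v,'a) path \<Rightarrow> 'k)" where
  "path_weight Q lt I es = foldr (\<lambda>e ab. case medge_weight Q lt I e of (x, y) \<Rightarrow>
      (amult Q lt I x (fst ab), amult Q lt I (snd ab) y)) es (aone Q, aone Q)"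

section \<open>The two-sided Anick resolution and minimality\<close>

text \<open>Generators of P_n: the (n-1)-chains, as vertices of Q_B; for n = 0 the vertices Q_0.\<close>
definition anick_gens :: "('v,'a) quiver \<Rightarrow> (('v,'a) path \<Rightarrow> ('v,'a) path \<Rightarrow> bool)
     \<Rightarrow> (('v,'a) path \<Rightarrow> 'k::zero) set \<Rightarrow> ('v,'a) path set \<Rightarrow> nat \<Rightarrow> ('v,'a) bvert set" where
  "anick_gens Q lt I W n = (if n = 0 then {(e, []) | e. e \<in> verts Q}
     else {(fst (hd ws), ws) | ws. is_chain Q lt I W ws \<and> length ws = n})"

text \<open>The induced map E \<otimes>_A P_n \<otimes>_A E \<rightarrow> E \<otimes>_A P_{n-1} \<otimes>_A E has, from generator c to
  generator c', the entry obtained from the component \<Sum> a \<otimes> b of d^M by taking the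
  coefficient of o(c') in a and of t(c') in b.\<close>
definition anick_minimal :: "('v,'a) quiver \<Rightarrow> (('v,'a) path \<Rightarrow> ('v,'a) path \<Rightarrow> bool)
     \<Rightarrow> (('v,'a) path \<Rightarrow> 'k::field) set \<Rightarrow> ('v,'a) path set \<Rightarrow> bool" where
  "anick_minimal Q lt I W \<longleftrightarrow>
     (\<forall>n\<ge>1. \<forall>c\<in>anick_gens Q lt I W n. \<forall>c'\<in>anick_gens Q lt I W (n - 1).
        (\<Sum>es\<in>zigzag_paths Q lt I W c c'.
            fst (path_weight Q lt I es) (vpath (fst c')) *
            snd (path_weight Q lt I es) (vpath (seq_end Q c'))) = 0)"

definition reduces1 :: "('v,'a) quiver \<Rightarrow> (('v,'a) path \<Rightarrow> ('v,'a) path \<Rightarrow> bool)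
     \<Rightarrow> (('v,'a) path \<Rightarrow> 'k::zero) set \<Rightarrow> ('v,'a) path set
     \<Rightarrow> ('v,'a) path \<Rightarrow> ('v,'a) path \<Rightarrow> bool" where
  "reduces1 Q lt I W w w' \<longleftrightarrow> w \<in> paths Q \<and> w' \<in> paths Q \<and>
     (\<exists>u v f p. u \<in> paths Q \<and> v \<in> paths Q \<and> f \<in> I \<and> f \<noteq> (\<lambda>_. 0) \<and> Tip lt f \<in> W \<and>
        pend Q u = fst (Tip lt f) \<and> pend Q (Tip lt f) = fst v \<and>
        w = pmult (pmult u (Tip lt f)) v \<and>
        p \<in> supp f \<and> p \<noteq> Tip lt f \<and> pend Q u = fst p \<and> pend Q p = fst v \<and>
        w' = pmult (pmult u p) v)"

definition converges :: "('v,'a) quiver \<Rightarrow> (('v,'a) path \<Rightarrow> ('v,'a) path \<Rightarrow> bool)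
     \<Rightarrow> (('v,'a) path \<Rightarrow> 'k::zero) set \<Rightarrow> ('v,'a) path set
     \<Rightarrow> ('v,'a) path \<Rightarrow> ('v,'a) path \<Rightarrow> bool" where
  "converges Q lt I W = tranclp (reduces1 Q lt I W)"

end

theory Submission imports Defs begin

lemma composable_app:
  "composable Q v (as @ bs) = (composable Q v as \<and> composable Q (pend Q (v, as)) bs)"
proof (induction as arbitrary: v)
  case Nil then show ?case by (simp add: pend_def)
next
  case (Cons a as) then show ?case by (auto simp: pend_def)
qed

lemma pend_app: "pend Q (v, as @ bs) = pend Q (pend Q (v, as), bs)"
  unfolding pend_def by auto

lemma composable_set: "composable Q v as \<Longrightarrow> set as \<subseteq> arrs Q"
  by (induction as arbitrary: v) auto

lemma composable_last: "composable Q v as \<Longrightarrow> as \<noteq> [] \<Longrightarrow> last as \<in> arrs Q"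
  using composable_set by (metis last_in_set subsetD)

lemma pend_in_verts:
  assumes "finite_quiver Q" "p \<in> paths Q" shows "pend Q p \<in> verts Q"
proof -
  obtain v as where p: "p = (v, as)" by (cases p)
  show ?thesis using assms composable_last[of Q v as] unfolding finite_quiver_def paths_def pend_def p
    by auto
qed

lemma paths_app:
  assumes "finite_quiver Q"
  shows "((v, as @ bs) \<in> paths Q) = ((v, as) \<in> paths Q \<and> (pend Q (v, as), bs) \<in> paths Q)"
  using pend_in_verts[OF assms, of "(v,as)"] composable_app[of Q v as bs]
  unfolding paths_def by auto

lemma adm_parts:
  assumes "admissible_order Q lt"
  shows "\<forall>p\<in>paths Q. \<not> lt p p"
   and "\<forall>p\<in>paths Q. \<forall>q\<in>paths Q. \<forall>r\<in>paths Q. lt p q \<longrightarrow> lt q r \<longrightarrow> lt p r"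
   and "\<forall>p\<in>paths Q. \<forall>q\<in>paths Q. p \<noteq> q \<longrightarrow> lt p q \<or> lt q p"
   and "wf {(p, q). p \<in> paths Q \<and> q \<in> paths Q \<and> lt p q}"
   and "\<forall>p\<in>paths Q. \<forall>q\<in>paths Q. \<forall>r\<in>paths Q.
        lt p q \<longrightarrow> pend Q p = fst r \<longrightarrow> pend Q q = fst r \<longrightarrow> lt (pmult p r) (pmult q r)"
   and "\<forall>p\<in>paths Q. \<forall>q\<in>paths Q. \<forall>r\<in>paths Q.
        lt p q \<longrightarrow> pend Q r = fst p \<longrightarrow> pend Q r = fst q \<longrightarrow> lt (pmult r p) (pmult r q)"
   and "\<forall>p w. is_factor Q p w \<longrightarrow> p = w \<or> lt p w"
  using assms unfolding admissible_order_def
  apply -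
  apply (elim conjE, assumption)+
  done

lemma adm_irrefl: assumes "admissible_order Q lt" "p \<in> paths Q" shows "\<not> lt p p"
  using bspec[OF adm_parts(1)[OF assms(1)] assms(2)] .
lemma adm_trans: assumes "admissible_order Q lt" "p \<in> paths Q" "q \<in> paths Q" "r \<in> paths Q"
  "lt p q" "lt q r" shows "lt p r"
  using bspec[OF bspec[OF bspec[OF adm_parts(2)[OF assms(1)] assms(2)] assms(3)] assms(4)] assms(5,6) by simp
lemma adm_total: assumes "admissible_order Q lt" "p \<in> paths Q" "q \<in> paths Q" "p \<noteq> q"
  shows "lt p q \<or> lt q p"
  using bspec[OF bspec[OF adm_parts(3)[OF assms(1)] assms(2)] assms(3)] assms(4) by simp
lemma adm_wf: "admissible_order Q lt \<Longrightarrow> wf {(p, q). p \<in> paths Q \<and> q \<in> paths Q \<and> lt p q}"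
  by (rule adm_parts(4))
lemma adm_rmono: assumes "admissible_order Q lt" "p \<in> paths Q" "q \<in> paths Q" "r \<in> paths Q"
  "lt p q" "pend Q p = fst r" "pend Q q = fst r" shows "lt (pmult p r) (pmult q r)"
  using bspec[OF bspec[OF bspec[OF adm_parts(5)[OF assms(1)] assms(2)] assms(3)] assms(4)] assms(5-7) by simp
lemma adm_lmono: assumes "admissible_order Q lt" "p \<in> paths Q" "q \<in> paths Q" "r \<in> paths Q"
  "lt p q" "pend Q r = fst p" "pend Q r = fst q" shows "lt (pmult r p) (pmult r q)"
  using bspec[OF bspec[OF bspec[OF adm_parts(6)[OF assms(1)] assms(2)] assms(3)] assms(4)] assms(5-7) by simp

lemma ideal_parts:
  assumes "two_sided_ideal Q I"
  shows "I \<subseteq> kQ Q" and "(\<lambda>_. 0) \<in> I"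
   and "\<forall>f\<in>I. \<forall>g\<in>I. (\<lambda>p. f p + g p) \<in> I"
   and "\<forall>c. \<forall>f\<in>I. (\<lambda>p. c * f p) \<in> I"
   and "\<forall>f\<in>I. \<forall>h\<in>kQ Q. kmult Q h f \<in> I \<and> kmult Q f h \<in> I"
  using assms unfolding two_sided_ideal_def
  apply -
  apply (elim conjE, assumption)
  apply (elim conjE, assumption)
  apply (elim conjE, assumption)
  apply (elim conjE, assumption)
  apply (elim conjE, assumption)
  done

lemma ideal_add: assumes "two_sided_ideal Q I" "f \<in> I" "g \<in> I" shows "(\<lambda>p. f p + g p) \<in> I"
  using bspec[OF bspec[OF ideal_parts(3)[OF assms(1)] assms(2)] assms(3)] .

lemma ideal_smult: assumes "two_sided_ideal Q I" "f \<in> I" shows "(\<lambda>p. c * f p) \<in> I"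
  using bspec[OF spec[OF ideal_parts(4)[OF assms(1)], of c] assms(2)] .

lemma ideal_zero: "two_sided_ideal Q I \<Longrightarrow> (\<lambda>_. 0) \<in> I"
  by (rule ideal_parts(2))

lemma ideal_diff:
  assumes "two_sided_ideal Q I" "f \<in> I" "g \<in> I" shows "(\<lambda>p. f p - g p) \<in> I"
proof -
  have "(\<lambda>p. (-1) * g p) \<in> I" using ideal_smult[OF assms(1,3)] .
  from ideal_add[OF assms(1,2) this] show ?thesis by simp
qed

lemma ideal_kQ: "two_sided_ideal Q I \<Longrightarrow> f \<in> I \<Longrightarrow> f \<in> kQ Q"
  using ideal_parts(1) by (rule subsetD)

lemma ideal_lmult: assumes "two_sided_ideal Q I" "f \<in> I" "h \<in> kQ Q" shows "kmult Q h f \<in> I"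
  using bspec[OF bspec[OF ideal_parts(5)[OF assms(1)] assms(2)] assms(3)] by simp

lemma ideal_rmult: assumes "two_sided_ideal Q I" "f \<in> I" "h \<in> kQ Q" shows "kmult Q f h \<in> I"
  using bspec[OF bspec[OF ideal_parts(5)[OF assms(1)] assms(2)] assms(3)] by simp

lemma kQ_sub:
  assumes "finite B" "B \<subseteq> paths Q" "supp f \<subseteq> B" shows "f \<in> kQ Q"
proof -
  have "finite (supp f)" by (rule finite_subset[OF assms(3,1)])
  moreover have "supp f \<subseteq> paths Q" using assms(3,2) by (rule subset_trans)
  ultimately show ?thesis by (simp add: kQ_def)
qed

lemma kQ_add: "f \<in> kQ Q \<Longrightarrow> g \<in> kQ Q \<Longrightarrow> (\<lambda>p. f p + g p) \<in> (kQ Q :: (_ \<Rightarrow> 'k::comm_ring_1) set)"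
proof -
  assume a: "f \<in> kQ Q" "g \<in> kQ Q"
  have "supp (\<lambda>p. f p + g p) \<subseteq> supp f \<union> supp g" unfolding supp_def by auto
  moreover have "finite (supp f \<union> supp g)" "supp f \<union> supp g \<subseteq> paths Q" using a unfolding kQ_def by auto
  ultimately show ?thesis using kQ_sub by blast
qed

lemma kQ_smult: "f \<in> kQ Q \<Longrightarrow> (\<lambda>p. c * f p) \<in> (kQ Q :: (_ \<Rightarrow> 'k::comm_ring_1) set)"
proof -
  assume a: "f \<in> kQ Q"
  have "supp (\<lambda>p. c * f p) \<subseteq> supp f" unfolding supp_def by auto
  moreover have "finite (supp f)" "supp f \<subseteq> paths Q" using a unfolding kQ_def by auto
  ultimately show ?thesis using kQ_sub by blast
qed

lemma kQ_diff: "f \<in> kQ Q \<Longrightarrow> g \<in> kQ Q \<Longrightarrow> (\<lambda>p. f p - g p) \<in> (kQ Q :: (_ \<Rightarrow> 'k::comm_ring_1) set)"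
proof -
  assume a: "f \<in> kQ Q" "g \<in> kQ Q"
  have "supp (\<lambda>p. f p - g p) \<subseteq> supp f \<union> supp g" unfolding supp_def by auto
  moreover have "finite (supp f \<union> supp g)" "supp f \<union> supp g \<subseteq> paths Q" using a unfolding kQ_def by auto
  ultimately show ?thesis using kQ_sub by blast
qed

lemma pelem_supp: "supp (pelem p :: _ \<Rightarrow> 'k::zero_neq_one) = {p}"
  unfolding supp_def pelem_def by auto

lemma pelem_kQ: "p \<in> paths Q \<Longrightarrow> (pelem p :: _ \<Rightarrow> 'k::zero_neq_one) \<in> kQ Q"
  unfolding kQ_def using pelem_supp[of p] by auto

lemma vpath_paths: "e \<in> verts Q \<Longrightarrow> vpath e \<in> paths Q"
  unfolding vpath_def paths_def by auto

lemma aone_kQ: "finite_quiver Q \<Longrightarrow> (aone Q :: _ \<Rightarrow> 'k::zero_neq_one) \<in> kQ Q"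
proof -
  assume fq: "finite_quiver Q"
  have "supp (aone Q :: _ \<Rightarrow> 'k) \<subseteq> vpath ` verts Q" unfolding supp_def aone_def by auto
  moreover have "finite (vpath ` verts Q)" using fq unfolding finite_quiver_def by auto
  moreover have "vpath ` verts Q \<subseteq> paths Q" using vpath_paths by auto
  ultimately show ?thesis using kQ_sub by blast
qed

lemma max_exists:
  assumes adm: "admissible_order Q lt" and fin: "finite S" and ne: "S \<noteq> {}" and sub: "S \<subseteq> paths Q"
  shows "\<exists>t\<in>S. \<forall>s\<in>S. s \<noteq> t \<longrightarrow> lt s t"
  using fin ne sub
proof (induction S rule: finite_ne_induct)
  case (singleton x) then show ?case by auto
next
  case (insert x F)
  then obtain t where t: "t \<in> F" "\<forall>s\<in>F. s \<noteq> t \<longrightarrow> lt s t" by auto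
  have xp: "x \<in> paths Q" and tp: "t \<in> paths Q" and Fp: "F \<subseteq> paths Q" using insert t by auto
  show ?case
  proof (cases "lt x t")
    case True then show ?thesis using t by auto
  next
    case False
    then have "x = t \<or> lt t x" using adm_total[OF adm xp tp] by blast
    then have tx: "lt t x" using insert t by auto
    have "\<forall>s\<in>F. s \<noteq> x \<longrightarrow> lt s x"
    proof (intro ballI impI)
      fix s assume s: "s \<in> F" "s \<noteq> x"
      show "lt s x"
      proof (cases "s = t")
        case True then show ?thesis using tx by simp
      next
        case False
        then have "lt s t" using t s by auto
        then show ?thesis using adm_trans[OF adm _ tp xp _ tx] s Fp by blast
      qed
    qed
    then show ?thesis by auto
  qed
qed

lemma Tip_prop:
  assumes adm: "admissible_order Q lt" and r: "r \<in> kQ Q" and nz: "r \<noteq> (\<lambda>_. 0)"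
  shows "Tip lt r \<in> supp r \<and> (\<forall>s\<in>supp r. s \<noteq> Tip lt r \<longrightarrow> lt s (Tip lt r))"
proof -
  have ne: "supp r \<noteq> {}" using nz unfolding supp_def by auto
  obtain t where t: "t \<in> supp r" "\<forall>s\<in>supp r. s \<noteq> t \<longrightarrow> lt s t"
    using max_exists[OF adm _ ne] r unfolding kQ_def by blast
  have uniq: "t' = t" if "t' \<in> supp r" "\<forall>s\<in>supp r. s \<noteq> t' \<longrightarrow> lt s t'" for t'
  proof (rule ccontr)
    assume "t' \<noteq> t"
    then have "lt t' t" "lt t t'" using that t by auto
    moreover have "t \<in> paths Q" "t' \<in> paths Q" using r t that unfolding kQ_def by auto
    ultimately show False using adm_trans[OF adm, of t' t t'] adm_irrefl[OF adm, of t'] by blast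
  qed
  have "Tip lt r = t" unfolding Tip_def
  proof (rule the_equality)
    show "t \<in> supp r \<and> (\<forall>s\<in>supp r. s \<noteq> t \<longrightarrow> lt s t)" using t by simp
  next
    fix t' assume "t' \<in> supp r \<and> (\<forall>s\<in>supp r. s \<noteq> t' \<longrightarrow> lt s t')"
    then show "t' = t" using uniq by simp
  qed
  then show ?thesis using t by simp
qed

definition nfrep where
  "nfrep Q lt I x y \<longleftrightarrow> y \<in> kQ Q \<and> supp y \<subseteq> NonTip Q lt I \<and> (\<lambda>p. x p - y p) \<in> I"

lemma nfrep_unique:
  fixes I :: "(('v,'a) path \<Rightarrow> 'k::field) set"
  assumes adm: "admissible_order Q lt" and id: "two_sided_ideal Q I"
    and y1: "nfrep Q lt I x y1" and y2: "nfrep Q lt I x y2"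
  shows "y1 = y2"
proof (rule ccontr)
  assume ne: "y1 \<noteq> y2"
  define d where "d = (\<lambda>p. y1 p - y2 p)"
  have i1: "(\<lambda>p. x p - y1 p) \<in> I" and i2: "(\<lambda>p. x p - y2 p) \<in> I"
    using y1 y2 unfolding nfrep_def by simp_all
  have "(\<lambda>p. (x p - y2 p) - (x p - y1 p)) \<in> I" using ideal_diff[OF id i2 i1] by simp
  moreover have "d = (\<lambda>p. (x p - y2 p) - (x p - y1 p))" unfolding d_def by auto
  ultimately have dI: "d \<in> I" by simp
  have dnz: "d \<noteq> (\<lambda>_. 0)"
  proof
    assume "d = (\<lambda>_. 0)"
    then have "\<And>p. y1 p - y2 p = 0" unfolding d_def by metis
    then have "y1 = y2" by (simp add: fun_eq_iff)
    then show False using ne by simp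
  qed
  have dk: "d \<in> kQ Q" using ideal_kQ[OF id dI] .
  have "Tip lt d \<in> supp d" using Tip_prop[OF adm dk dnz] by blast
  moreover have "supp d \<subseteq> supp y1 \<union> supp y2" unfolding d_def supp_def by auto
  moreover have "supp y1 \<subseteq> NonTip Q lt I" "supp y2 \<subseteq> NonTip Q lt I"
    using y1 y2 unfolding nfrep_def by simp_all
  ultimately have "Tip lt d \<in> NonTip Q lt I" by blast
  moreover have "Tip lt d \<in> TipI lt I" unfolding TipI_def using dI dnz by blast
  ultimately show False unfolding NonTip_def by simp
qed

lemma NF_eq:
  fixes I :: "(('v,'a) path \<Rightarrow> 'k::field) set"
  assumes adm: "admissible_order Q lt" and id: "two_sided_ideal Q I" and y: "nfrep Q lt I x y"
  shows "NF Q lt I x = y"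
proof -
  have h1: "\<And>z. z \<in> kQ Q \<and> supp z \<subseteq> NonTip Q lt I \<and> (\<lambda>p. x p - z p) \<in> I \<Longrightarrow> z = y"
    using nfrep_unique[OF adm id _ y] unfolding nfrep_def by simp
  have h2: "y \<in> kQ Q \<and> supp y \<subseteq> NonTip Q lt I \<and> (\<lambda>p. x p - y p) \<in> I"
    using y unfolding nfrep_def by simp
  show ?thesis unfolding NF_def by (rule the_equality[where P="\<lambda>z. z \<in> kQ Q \<and> supp z \<subseteq> NonTip Q lt I \<and> (\<lambda>p. x p - z p) \<in> I", OF h2 h1])
qed

lemma kmult_vertex:
  "kmult Q a b (e, []) = (if (e, []) \<in> paths Q then a (e, []) * b (e, []) else 0)"
  unfolding kmult_def plen_def lpart_def rpart_def pend_def by simp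

lemma pelem_lpart:
  assumes "i \<le> plen t"
  shows "(pelem u (lpart t i) :: 'k::zero_neq_one) =
    (if i = plen u \<and> fst t = fst u \<and> take (plen u) (snd t) = snd u then 1 else 0)"
proof -
  have "length (take i (snd t)) = i" using assms unfolding plen_def by simp
  then show ?thesis unfolding pelem_def lpart_def plen_def
    by (cases u) auto
qed

lemma kmult_pelem_left:
  fixes g :: "('v,'a) path \<Rightarrow> 'k::comm_ring_1"
  shows "kmult Q (pelem u) g t = (if t \<in> paths Q \<and> plen u \<le> plen t \<and> fst t = fst u \<and>
      take (plen u) (snd t) = snd u then g (pend Q u, drop (plen u) (snd t)) else 0)"
proof (cases "t \<in> paths Q")
  case False then show ?thesis unfolding kmult_def by simp
next
  case True
  have eq: "pelem u (lpart t i) * g (rpart Q t i) =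
     (if i = plen u then (if fst t = fst u \<and> take (plen u) (snd t) = snd u
        then g (pend Q u, drop (plen u) (snd t)) else 0) else 0)" if "i \<in> {0..plen t}" for i
  proof -
    have i: "i \<le> plen t" using that by simp
    show ?thesis
    proof (cases "i = plen u \<and> fst t = fst u \<and> take (plen u) (snd t) = snd u")
      case True
      then have "lpart t i = u" unfolding lpart_def by (cases u) auto
      then show ?thesis using True unfolding rpart_def pelem_def by simp
    next
      case False
      have "lpart t i \<noteq> u"
      proof
        assume eq: "lpart t i = u"
        have "length (take i (snd t)) = i" using i unfolding plen_def by simp
        then have "i = plen u" using eq unfolding lpart_def plen_def by auto
        then show False using False eq unfolding lpart_def by (cases u) auto
      qed
      then have "(pelem u (lpart t i) :: 'k) = 0" unfolding pelem_def by simp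
      then show ?thesis using False by auto
    qed
  qed
  have "kmult Q (pelem u) g t = (\<Sum>i\<in>{0..plen t}. pelem u (lpart t i) * g (rpart Q t i))"
    unfolding kmult_def using True by simp
  also have "\<dots> = (\<Sum>i\<in>{0..plen t}. (if i = plen u then (if fst t = fst u \<and> take (plen u) (snd t) = snd u
        then g (pend Q u, drop (plen u) (snd t)) else 0) else 0))"
    by (rule sum.cong[OF refl eq])
  also have "\<dots> = (if plen u \<in> {0..plen t} then (if fst t = fst u \<and> take (plen u) (snd t) = snd u
        then g (pend Q u, drop (plen u) (snd t)) else 0) else 0)"
    by (rule sum.delta) simp
  finally show ?thesis using True by auto
qed

lemma pelem_rpart:
  assumes "i \<le> plen t"
  shows "(pelem v (rpart Q t i) :: 'k::zero_neq_one) =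
    (if plen v \<le> plen t \<and> i = plen t - plen v \<and> pend Q (lpart t i) = fst v \<and> drop i (snd t) = snd v then 1 else 0)"
proof -
  obtain e b where v: "v = (e, b)" by (cases v)
  have len: "length (drop i (snd t)) = plen t - i" using assms unfolding plen_def by simp
  have A: "(rpart Q t i = v) = (pend Q (lpart t i) = e \<and> drop i (snd t) = b)"
    unfolding rpart_def v by simp
  have B: "drop i (snd t) = b \<Longrightarrow> plen v \<le> plen t \<and> i = plen t - plen v"
  proof -
    assume "drop i (snd t) = b"
    then have "plen v = plen t - i" using len unfolding v plen_def by simp
    then show ?thesis using assms by simp
  qed
  have C: "(rpart Q t i = v) = (plen v \<le> plen t \<and> i = plen t - plen v \<and> pend Q (lpart t i) = fst v \<and> drop i (snd t) = snd v)"
    using A B unfolding v by auto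
  show ?thesis unfolding pelem_def using C by simp
qed

lemma kmult_pelem_right:
  fixes h :: "('v,'a) path \<Rightarrow> 'k::comm_ring_1"
  shows "kmult Q h (pelem v) t = (if t \<in> paths Q \<and> plen v \<le> plen t \<and>
      pend Q (lpart t (plen t - plen v)) = fst v \<and> drop (plen t - plen v) (snd t) = snd v
      then h (lpart t (plen t - plen v)) else 0)"
proof (cases "t \<in> paths Q")
  case False then show ?thesis unfolding kmult_def by simp
next
  case True
  let ?k = "plen t - plen v"
  have eq: "h (lpart t i) * pelem v (rpart Q t i) =
     (if i = ?k then (if plen v \<le> plen t \<and> pend Q (lpart t ?k) = fst v \<and> drop ?k (snd t) = snd v
        then h (lpart t ?k) else 0) else 0)" if "i \<in> {0..plen t}" for i
  proof -
    have i: "i \<le> plen t" using that by simp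
    have pe: "(pelem v (rpart Q t i) :: 'k) =
      (if plen v \<le> plen t \<and> i = ?k \<and> pend Q (lpart t i) = fst v \<and> drop i (snd t) = snd v then 1 else 0)"
      by (rule pelem_rpart[OF i])
    show ?thesis using pe by auto
  qed
  have "kmult Q h (pelem v) t = (\<Sum>i\<in>{0..plen t}. h (lpart t i) * pelem v (rpart Q t i))"
    unfolding kmult_def using True by simp
  also have "\<dots> = (\<Sum>i\<in>{0..plen t}. (if i = ?k then (if plen v \<le> plen t \<and> pend Q (lpart t ?k) = fst v \<and> drop ?k (snd t) = snd v
        then h (lpart t ?k) else 0) else 0))"
    by (rule sum.cong[OF refl eq])
  also have "\<dots> = (if ?k \<in> {0..plen t} then (if plen v \<le> plen t \<and> pend Q (lpart t ?k) = fst v \<and> drop ?k (snd t) = snd v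
        then h (lpart t ?k) else 0) else 0)"
    by (rule sum.delta) simp
  finally show ?thesis using True by auto
qed

lemma kmult_kQ:
  fixes a b :: "('v,'a) path \<Rightarrow> 'k::comm_ring_1"
  assumes a: "a \<in> kQ Q" and b: "b \<in> kQ Q"
  shows "kmult Q a b \<in> kQ Q"
proof -
  let ?B = "((\<lambda>(p, q). (fst p, snd p @ snd q)) ` (supp a \<times> supp b)) \<inter> paths Q"
  have "supp (kmult Q a b) \<subseteq> ?B"
  proof
    fix t assume "t \<in> supp (kmult Q a b)"
    then have t: "t \<in> paths Q" and ne: "(\<Sum>i\<in>{0..plen t}. a (lpart t i) * b (rpart Q t i)) \<noteq> 0"
      unfolding supp_def kmult_def by (auto split: if_splits)
    obtain i where "a (lpart t i) * b (rpart Q t i) \<noteq> 0"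
      using sum.not_neutral_contains_not_neutral[OF ne] by blast
    then have "lpart t i \<in> supp a" "rpart Q t i \<in> supp b" unfolding supp_def by auto
    moreover have "t = (fst (lpart t i), snd (lpart t i) @ snd (rpart Q t i))"
      unfolding lpart_def rpart_def by simp
    ultimately show "t \<in> ?B" using t by force
  qed
  moreover have "finite ?B" using a b unfolding kQ_def by auto
  ultimately show ?thesis using kQ_sub[of ?B] by blast
qed

section \<open>Normal forms and reductions\<close>

lemma gsb_parts:
  assumes "reduced_GSB Q lt I G"
  shows "G \<subseteq> I"
   and "\<forall>g\<in>G. g \<noteq> (\<lambda>_. 0) \<and> g (Tip lt g) = 1 \<and>
        (\<forall>p\<in>supp g. p \<noteq> Tip lt g \<longrightarrow> p \<in> NonTip Q lt I)"
   and "\<forall>t\<in>TipI lt I. \<exists>w\<in>Tip lt ` G. is_factor Q w t"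
  using assms unfolding reduced_GSB_def
  apply -
  apply (elim conjE, assumption)+
  done

lemma comb:
  fixes I :: "(('v,'a) path \<Rightarrow> 'k::field) set"
  assumes id: "two_sided_ideal Q I" and fin: "finite F"
  shows "z \<in> kQ Q \<Longrightarrow> supp z \<subseteq> F \<Longrightarrow> (\<forall>t\<in>F. \<exists>y. nfrep Q lt I (pelem t) y \<and> supp y \<subseteq> S)
    \<Longrightarrow> \<exists>y. nfrep Q lt I z y \<and> supp y \<subseteq> S"
  using fin
proof (induction F arbitrary: z)
  case empty
  then have z0: "z = (\<lambda>_. 0)" unfolding supp_def by auto
  have k0: "(\<lambda>_. 0 :: 'k) \<in> kQ Q" by (rule kQ_sub[of "{}"]) (auto simp: supp_def)
  have "nfrep Q lt I z (\<lambda>_. 0)" unfolding nfrep_def z0 using k0 ideal_zero[OF id]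
    by (simp add: supp_def)
  then show ?case by (auto simp: supp_def)
next
  case (insert a F)
  define z' where "z' = z(a := 0)"
  have sz': "supp z' \<subseteq> supp z" unfolding z'_def supp_def by auto
  have "supp z' \<subseteq> F" using insert.prems(2) unfolding z'_def supp_def by auto
  moreover have "z' \<in> kQ Q" using kQ_sub[of "supp z" Q z'] sz' insert.prems(1) unfolding kQ_def by auto
  ultimately obtain y' where y': "nfrep Q lt I z' y'" "supp y' \<subseteq> S"
    using insert.IH insert.prems(3) by blast
  obtain ya where ya: "nfrep Q lt I (pelem a) ya" "supp ya \<subseteq> S" using insert.prems(3) by blast
  define y where "y = (\<lambda>p. y' p + z a * ya p)"
  have yk: "y \<in> kQ Q" unfolding y_def using y'(1) ya(1) unfolding nfrep_def
    by (intro kQ_add kQ_smult) auto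
  have sy: "supp y \<subseteq> supp y' \<union> supp ya" unfolding y_def supp_def by auto
  have eq: "(\<lambda>p. z p - y p) = (\<lambda>p. (z' p - y' p) + z a * (pelem a p - ya p))"
    unfolding y_def z'_def pelem_def by (auto simp: fun_eq_iff algebra_simps)
  have "(\<lambda>p. (z' p - y' p) + z a * (pelem a p - ya p)) \<in> I"
    using y'(1) ya(1) unfolding nfrep_def
    by (intro ideal_add[OF id] ideal_smult[OF id]) auto
  then have "nfrep Q lt I z y" unfolding nfrep_def using yk sy y'(1) ya(1) eq
    unfolding nfrep_def by auto
  then show ?case using sy y'(2) ya(2) by blast
qed

lemma reduces1_intro:
  assumes "w \<in> paths Q" "w' \<in> paths Q" "u \<in> paths Q" "v \<in> paths Q" "f \<in> I" "f \<noteq> (\<lambda>_. 0)"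
    "Tip lt f \<in> W" "pend Q u = fst (Tip lt f)" "pend Q (Tip lt f) = fst v"
    "w = pmult (pmult u (Tip lt f)) v" "p \<in> supp f" "p \<noteq> Tip lt f" "pend Q u = fst p"
    "pend Q p = fst v" "w' = pmult (pmult u p) v"
  shows "reduces1 Q lt I W w w'"
  unfolding reduces1_def using assms by blast

lemma nf_path_exists:
  fixes I :: "(('v,'a) path \<Rightarrow> 'k::field) set"
  assumes fq: "finite_quiver Q" and adm: "admissible_order Q lt" and id: "two_sided_ideal Q I"
    and gsb: "reduced_GSB Q lt I G"
  shows "p \<in> paths Q \<longrightarrow> (\<exists>y. nfrep Q lt I (pelem p) y \<and>
      supp y \<subseteq> {q. q = p \<or> converges Q lt I (Tip lt ` G) p q})"
proof (induction p rule: wf_induct_rule[OF adm_wf[OF adm]])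
  case (1 p)
  show ?case
  proof
    assume pp: "p \<in> paths Q"
    let ?W = "Tip lt ` G"
    let ?S = "{q. q = p \<or> converges Q lt I ?W p q}"
    show "\<exists>y. nfrep Q lt I (pelem p) y \<and> supp y \<subseteq> ?S"
    proof (cases "p \<in> NonTip Q lt I")
      case True
      have a1: "(pelem p :: _ \<Rightarrow> 'k) \<in> kQ Q" by (rule pelem_kQ[OF pp])
      have a2: "supp (pelem p :: _ \<Rightarrow> 'k) = {p}" by (rule pelem_supp)
      have "nfrep Q lt I (pelem p) (pelem p :: _ \<Rightarrow> 'k)"
        unfolding nfrep_def using a1 a2 True ideal_zero[OF id] by simp
      moreover have "supp (pelem p :: _ \<Rightarrow> 'k) \<subseteq> ?S" using a2 by simp
      ultimately show ?thesis by blast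
    next
      case False
      then have "p \<in> TipI lt I" using pp unfolding NonTip_def by blast
      then obtain w where wW: "w \<in> ?W" and fac: "is_factor Q w p" using gsb_parts(3)[OF gsb] by blast
      obtain g where gG: "g \<in> G" and wg: "w = Tip lt g" using wW by blast
      obtain u v where up: "u \<in> paths Q" and vp: "v \<in> paths Q" and uw: "pend Q u = fst w"
        and wv: "pend Q w = fst v" and pdef: "p = pmult (pmult u w) v" and wp: "w \<in> paths Q"
        using fac unfolding is_factor_def by blast
      have gI: "g \<in> I" using gG gsb_parts(1)[OF gsb] by blast
      have gk: "g \<in> kQ Q" using ideal_kQ[OF id gI] .
      have gnz: "g \<noteq> (\<lambda>_. 0)" and g1: "g (Tip lt g) = 1" using gG gsb_parts(2)[OF gsb] by auto
      have tipg: "\<forall>s\<in>supp g. s \<noteq> Tip lt g \<longrightarrow> lt s (Tip lt g)" using Tip_prop[OF adm gk gnz] by blast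
      define h where "h = kmult Q (pelem u) g"
      define r where "r = kmult Q h (pelem v)"
      have hI: "h \<in> I" unfolding h_def by (rule ideal_lmult[OF id gI pelem_kQ[OF up]])
      have rI: "r \<in> I" unfolding r_def by (rule ideal_rmult[OF id hI pelem_kQ[OF vp]])
      have rk: "r \<in> kQ Q" using ideal_kQ[OF id rI] .
      obtain eu bu where u: "u = (eu, bu)" by (cases u)
      obtain ew bw where w: "w = (ew, bw)" by (cases w)
      obtain ev bv where v: "v = (ev, bv)" by (cases v)
      have p: "p = (eu, bu @ bw @ bv)" using pdef unfolding u w v pmult_def by simp
      have ew: "ew = pend Q (eu, bu)" using uw unfolding u w by simp
      have ev: "ev = pend Q (ew, bw)" using wv unfolding w v by simp
      have uwp: "(eu, bu @ bw) \<in> paths Q" using pp unfolding p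
        using paths_app[OF fq, of eu "bu @ bw" bv] by simp
      have R1: "r p = 1"
      proof -
        have k: "plen p - plen v = length (bu @ bw)" unfolding p v plen_def by simp
        have lp0: "lpart p (length (bu @ bw)) = (eu, bu @ bw)" unfolding lpart_def p by simp
        have lp: "lpart p (plen p - plen v) = (eu, bu @ bw)" using lp0 k by simp
        have pe: "pend Q (eu, bu @ bw) = ev" using ev ew pend_app[of Q eu bu bw] by simp
        have "r p = h (eu, bu @ bw)" unfolding r_def kmult_pelem_right lp
          using pp pe unfolding p v plen_def by (simp add: k[unfolded p v plen_def])
        also have "\<dots> = g (pend Q u, bw)" unfolding h_def kmult_pelem_left using uwp
          unfolding u plen_def by simp
        also have "\<dots> = 1" using g1 wg ew unfolding u w by simp
        finally show ?thesis .
      qed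
      have R2: "reduces1 Q lt I ?W p t \<and> lt t p \<and> t \<in> paths Q" if tp: "t \<noteq> p" and rt: "r t \<noteq> 0" for t
      proof -
        let ?k = "plen t - plen v"
        define s where "s = lpart t ?k"
        have c1: "t \<in> paths Q" "plen v \<le> plen t" "pend Q s = fst v" "drop ?k (snd t) = snd v"
          and hs: "h s \<noteq> 0"
          using rt unfolding r_def kmult_pelem_right s_def by (auto split: if_splits)
        have c2: "s \<in> paths Q" "plen u \<le> plen s" "fst s = fst u" "take (plen u) (snd s) = snd u"
          and gq: "g (pend Q u, drop (plen u) (snd s)) \<noteq> 0"
          using hs unfolding h_def kmult_pelem_left by (auto split: if_splits)
        define q where "q = (pend Q u, drop (plen u) (snd s))"
        have qs: "q \<in> supp g" using gq unfolding q_def supp_def by simp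
        have qp: "q \<in> paths Q" using qs gk unfolding kQ_def by blast
        have sdef: "s = (eu, bu @ snd q)" using c2(3,4) unfolding q_def u plen_def
          by (cases s) (simp, metis append_take_drop_id)
        have tdef: "t = (eu, bu @ snd q @ bv)"
        proof -
          have "snd t = take ?k (snd t) @ drop ?k (snd t)" by simp
          also have "take ?k (snd t) = snd s" unfolding s_def lpart_def by simp
          finally have "snd t = (bu @ snd q) @ bv" using c1(4) sdef unfolding v by simp
          moreover have "fst t = eu" using c2(3) unfolding s_def lpart_def u by simp
          ultimately show ?thesis by (cases t) simp
        qed
        have fq': "fst q = ew" unfolding q_def u using ew by simp
        have pq: "pend Q q = ev"
        proof -
          have "pend Q s = pend Q (pend Q (eu, bu), snd q)" unfolding sdef by (rule pend_app)
          also have "\<dots> = pend Q q" using fq' ew by (cases q) simp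
          finally show ?thesis using c1(3) unfolding v by simp
        qed
        have qw: "q \<noteq> w"
        proof
          assume "q = w"
          then have "snd q = bw" unfolding w by simp
          then show False using tp tdef p by simp
        qed
        have ltqw: "lt q w" using tipg qs qw wg by simp
        have l1: "lt (pmult u q) (pmult u w)"
          by (rule adm_lmono[OF adm qp wp up ltqw]) (use uw fq' w in simp_all)
        have uqp: "pmult u q \<in> paths Q" using c2(1) sdef unfolding u pmult_def by simp
        have uwp': "pmult u w \<in> paths Q" using uwp unfolding u w pmult_def by simp
        have peuq: "pend Q (pmult u q) = fst v"
          using pq fq' ew pend_app[of Q eu bu "snd q"] unfolding u v pmult_def by (cases q) simp
        have peuw: "pend Q (pmult u w) = fst v"
          using ev ew pend_app[of Q eu bu bw] unfolding u v w pmult_def by simp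
        have l2: "lt (pmult (pmult u q) v) (pmult (pmult u w) v)"
          by (rule adm_rmono[OF adm uqp uwp' vp l1 peuq peuw])
        have teq: "t = pmult (pmult u q) v" unfolding tdef u v pmult_def by simp
        have lttp: "lt t p" using l2 teq pdef by simp
        have red: "reduces1 Q lt I ?W p t"
        proof (rule reduces1_intro[where u=u and v=v and f=g and p=q])
          show "p \<in> paths Q" by (rule pp)
          show "t \<in> paths Q" by (rule c1(1))
          show "u \<in> paths Q" by (rule up)
          show "v \<in> paths Q" by (rule vp)
          show "g \<in> I" by (rule gI)
          show "g \<noteq> (\<lambda>_. 0)" by (rule gnz)
          show "Tip lt g \<in> ?W" using gG by blast
          show "pend Q u = fst (Tip lt g)" using uw wg by simp
          show "pend Q (Tip lt g) = fst v" using wv wg by simp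
          show "p = pmult (pmult u (Tip lt g)) v" using pdef wg by simp
          show "q \<in> supp g" by (rule qs)
          show "q \<noteq> Tip lt g" using qw wg by simp
          show "pend Q u = fst q" using uw fq' w by simp
          show "pend Q q = fst v" using pq v by simp
          show "t = pmult (pmult u q) v" by (rule teq)
        qed
        show ?thesis using red lttp c1(1) by blast
      qed
      define z where "z = (\<lambda>x. pelem p x - r x)"
      have zk: "z \<in> kQ Q" unfolding z_def by (rule kQ_diff[OF pelem_kQ[OF pp] rk])
      have sz: "supp z \<subseteq> {t. t \<noteq> p \<and> r t \<noteq> 0}"
        unfolding z_def supp_def pelem_def using R1 by auto
      have hyp: "\<forall>t\<in>supp z. \<exists>y. nfrep Q lt I (pelem t) y \<and> supp y \<subseteq> ?S"
      proof
        fix t assume "t \<in> supp z"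
        then have tp: "t \<noteq> p" and rt: "r t \<noteq> 0" using sz by auto
        have red: "reduces1 Q lt I ?W p t" and lttp: "lt t p" and tpp: "t \<in> paths Q"
          using R2[OF tp rt] by auto
        obtain y where y: "nfrep Q lt I (pelem t) y" "supp y \<subseteq> {q. q = t \<or> converges Q lt I ?W t q}"
          using "1"[of t] lttp tpp pp by blast
        have "{q. q = t \<or> converges Q lt I ?W t q} \<subseteq> ?S"
          using red unfolding converges_def by (auto intro: tranclp_trans)
        then show "\<exists>y. nfrep Q lt I (pelem t) y \<and> supp y \<subseteq> ?S" using y by blast
      qed
      have finz: "finite (supp z)" using zk unfolding kQ_def by simp
      obtain y where y: "nfrep Q lt I z y" "supp y \<subseteq> ?S"
        using comb[OF id finz zk subset_refl hyp] by blast
      have "(\<lambda>x. pelem p x - y x) = (\<lambda>x. r x + (z x - y x))" unfolding z_def by auto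
      moreover have "(\<lambda>x. r x + (z x - y x)) \<in> I" using ideal_add[OF id rI] y(1) unfolding nfrep_def by blast
      ultimately have "nfrep Q lt I (pelem p) y" using y(1) unfolding nfrep_def by simp
      then show ?thesis using y(2) by blast
    qed
  qed
qed

lemma nf_exists:
  fixes I :: "(('v,'a) path \<Rightarrow> 'k::field) set"
  assumes fq: "finite_quiver Q" and adm: "admissible_order Q lt" and id: "two_sided_ideal Q I"
    and gsb: "reduced_GSB Q lt I G" and z: "z \<in> kQ Q"
  shows "nfrep Q lt I z (NF Q lt I z)"
proof -
  have fin: "finite (supp z)" and sp: "supp z \<subseteq> paths Q" using z unfolding kQ_def by auto
  have "\<forall>t\<in>supp z. \<exists>y. nfrep Q lt I (pelem t) y \<and> supp y \<subseteq> UNIV"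
    using nf_path_exists[OF fq adm id gsb] sp by blast
  then obtain y where y: "nfrep Q lt I z y" using comb[OF id fin z subset_refl] by blast
  then show ?thesis using NF_eq[OF adm id y] by simp
qed

lemma NF_supp_pelem:
  fixes I :: "(('v,'a) path \<Rightarrow> 'k::field) set"
  assumes fq: "finite_quiver Q" and adm: "admissible_order Q lt" and id: "two_sided_ideal Q I"
    and gsb: "reduced_GSB Q lt I G" and pp: "p \<in> paths Q"
  shows "supp (NF Q lt I (pelem p :: _ \<Rightarrow> 'k)) \<subseteq> {q. q = p \<or> converges Q lt I (Tip lt ` G) p q}"
proof -
  obtain y :: "_ \<Rightarrow> 'k" where y: "nfrep Q lt I (pelem p) y"
      "supp y \<subseteq> {q. q = p \<or> converges Q lt I (Tip lt ` G) p q}"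
    using nf_path_exists[OF fq adm id gsb] pp by blast
  then show ?thesis using NF_eq[OF adm id y(1)] by simp
qed

lemma NF_low:
  fixes I :: "(('v,'a) path \<Rightarrow> 'k::field) set"
  assumes fq: "finite_quiver Q" and adm: "admissible_order Q lt" and id: "two_sided_ideal Q I"
    and gsb: "reduced_GSB Q lt I G" and l2: "ideal_in_len2 I" and z: "z \<in> kQ Q" and x: "plen x < 2"
  shows "NF Q lt I z x = z x"
proof -
  have "(\<lambda>p. z p - NF Q lt I z p) \<in> I" using nf_exists[OF fq adm id gsb z] unfolding nfrep_def by blast
  then have "\<forall>p\<in>supp (\<lambda>p. z p - NF Q lt I z p). plen p \<ge> 2" using l2 unfolding ideal_in_len2_def by blast
  then have "x \<notin> supp (\<lambda>p. z p - NF Q lt I z p)" using x by auto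
  then show ?thesis unfolding supp_def by simp
qed

lemma amult_kQ:
  fixes I :: "(('v,'a) path \<Rightarrow> 'k::field) set"
  assumes fq: "finite_quiver Q" and adm: "admissible_order Q lt" and id: "two_sided_ideal Q I"
    and gsb: "reduced_GSB Q lt I G" and a: "a \<in> kQ Q" and b: "b \<in> kQ Q"
  shows "amult Q lt I a b \<in> kQ Q"
  using nf_exists[OF fq adm id gsb kmult_kQ[OF a b]] unfolding amult_def nfrep_def by blast

lemma amult_vertex:
  fixes I :: "(('v,'a) path \<Rightarrow> 'k::field) set"
  assumes fq: "finite_quiver Q" and adm: "admissible_order Q lt" and id: "two_sided_ideal Q I"
    and gsb: "reduced_GSB Q lt I G" and l2: "ideal_in_len2 I" and a: "a \<in> kQ Q" and b: "b \<in> kQ Q"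
  shows "amult Q lt I a b (e, []) = (if (e, []) \<in> paths Q then a (e, []) * b (e, []) else 0)"
proof -
  have "plen (e, []) < 2" unfolding plen_def by simp
  then have "amult Q lt I a b (e, []) = kmult Q a b (e, [])"
    unfolding amult_def by (rule NF_low[OF fq adm id gsb l2 kmult_kQ[OF a b]])
  then show ?thesis using kmult_vertex[of Q a b e] by simp
qed

lemma path_weight_Cons:
  "path_weight Q lt I (x # es) = (amult Q lt I (fst (medge_weight Q lt I x)) (fst (path_weight Q lt I es)),
      amult Q lt I (snd (path_weight Q lt I es)) (snd (medge_weight Q lt I x)))"
  unfolding path_weight_def by (simp add: split_beta)

lemma path_weight_Nil: "path_weight Q lt I [] = (aone Q, aone Q)"
  unfolding path_weight_def by simp

lemma pw_vertex:
  fixes I :: "(('v,'a) path \<Rightarrow> 'k::field) set"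
  assumes fq: "finite_quiver Q" and adm: "admissible_order Q lt" and id: "two_sided_ideal Q I"
    and gsb: "reduced_GSB Q lt I G" and l2: "ideal_in_len2 I"
  shows "(\<forall>x\<in>set es. fst (medge_weight Q lt I x) \<in> kQ Q \<and> snd (medge_weight Q lt I x) \<in> kQ Q) \<Longrightarrow>
    fst (path_weight Q lt I es) \<in> kQ Q \<and> snd (path_weight Q lt I es) \<in> kQ Q \<and>
    ((\<exists>x\<in>set es. fst (medge_weight Q lt I x) (e, []) = 0) \<longrightarrow> fst (path_weight Q lt I es) (e, []) = 0) \<and>
    ((\<exists>x\<in>set es. snd (medge_weight Q lt I x) (e', []) = 0) \<longrightarrow> snd (path_weight Q lt I es) (e', []) = 0)"
proof (induction es)
  case Nil
  then show ?case using aone_kQ[OF fq] unfolding path_weight_Nil by simp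
next
  case (Cons x es)
  let ?a = "fst (medge_weight Q lt I x)" and ?b = "snd (medge_weight Q lt I x)"
  let ?A = "fst (path_weight Q lt I es)" and ?B = "snd (path_weight Q lt I es)"
  have xa: "?a \<in> kQ Q" and xb: "?b \<in> kQ Q" using Cons.prems by auto
  have IH: "?A \<in> kQ Q \<and> ?B \<in> kQ Q \<and>
    ((\<exists>x\<in>set es. fst (medge_weight Q lt I x) (e, []) = 0) \<longrightarrow> ?A (e, []) = 0) \<and>
    ((\<exists>x\<in>set es. snd (medge_weight Q lt I x) (e', []) = 0) \<longrightarrow> ?B (e', []) = 0)"
    using Cons.IH Cons.prems by simp
  have k1: "amult Q lt I ?a ?A \<in> kQ Q" using amult_kQ[OF fq adm id gsb xa] IH by blast
  have k2: "amult Q lt I ?B ?b \<in> kQ Q" using amult_kQ[OF fq adm id gsb _ xb] IH by blast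
  have v1: "amult Q lt I ?a ?A (e, []) = (if (e, []) \<in> paths Q then ?a (e, []) * ?A (e, []) else 0)"
    using amult_vertex[OF fq adm id gsb l2 xa] IH by blast
  have v2: "amult Q lt I ?B ?b (e', []) = (if (e', []) \<in> paths Q then ?B (e', []) * ?b (e', []) else 0)"
    using amult_vertex[OF fq adm id gsb l2 _ xb] IH by blast
  show ?case unfolding path_weight_Cons using k1 k2 v1 v2 IH by auto
qed

section \<open>Products along the quiver of the bar resolution\<close>

lemma pend_pair: "pend Q (fst x, snd x) = pend Q x" by simp

lemma seq_comp_append:
  "seq_comp Q e (xs @ ys) = (seq_comp Q e xs \<and> seq_comp Q (pend Q (e, concat (map snd xs))) ys)"
proof (induction xs arbitrary: e)
  case Nil then show ?case by (simp add: pend_def)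
next
  case (Cons x xs)
  show ?case
  proof (cases "fst x = e")
    case True
    have "pend Q (e, snd x @ concat (map snd xs)) = pend Q (pend Q x, concat (map snd xs))"
      using pend_app[of Q e "snd x" "concat (map snd xs)"] True by (metis prod.collapse)
    then show ?thesis using Cons.IH[of "pend Q x"] True by simp
  next
    case False then show ?thesis by simp
  qed
qed

lemma seq_comp_paths:
  assumes fq: "finite_quiver Q"
  shows "e \<in> verts Q \<Longrightarrow> (\<forall>w\<in>set ws. w \<in> paths Q) \<Longrightarrow> seq_comp Q e ws \<Longrightarrow>
    (e, concat (map snd ws)) \<in> paths Q"
proof (induction ws arbitrary: e)
  case Nil then show ?case unfolding paths_def by simp
next
  case (Cons w ws)
  have we: "fst w = e" and sc: "seq_comp Q (pend Q w) ws" using Cons.prems(3) by auto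
  have wp: "w \<in> paths Q" using Cons.prems(2) by simp
  have "pend Q w \<in> verts Q" using pend_in_verts[OF fq wp] .
  then have r: "(pend Q w, concat (map snd ws)) \<in> paths Q" using Cons.IH Cons.prems(2) sc by simp
  have w': "(e, snd w) \<in> paths Q" "pend Q (e, snd w) = pend Q w" using wp we by (metis prod.collapse)+
  show ?case using paths_app[OF fq, of e "snd w" "concat (map snd ws)"] w' r by simp
qed

lemma reduces1_fst_pend:
  assumes "reduces1 Q lt I W x y"
  shows "fst y = fst x"
  using assms unfolding reduces1_def pmult_def by auto

lemma lift1:
  fixes I :: "(('v,'a) path \<Rightarrow> 'k::field) set"
  assumes fq: "finite_quiver Q" and id: "two_sided_ideal Q I"
    and red: "reduces1 Q lt I W x y" and X: "(e, A @ snd x @ B) \<in> paths Q" and fx: "fst x = pend Q (e, A)"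
  shows "reduces1 Q lt I W (e, A @ snd x @ B) (e, A @ snd y @ B)"
proof -
  obtain u v f p where up: "u \<in> paths Q" and vp: "v \<in> paths Q" and fI: "f \<in> I" and fnz: "f \<noteq> (\<lambda>_. 0)"
    and fW: "Tip lt f \<in> W" and uT: "pend Q u = fst (Tip lt f)" and Tv: "pend Q (Tip lt f) = fst v"
    and xdef: "x = pmult (pmult u (Tip lt f)) v" and ps: "p \<in> supp f" and pT: "p \<noteq> Tip lt f"
    and up': "pend Q u = fst p" and pv: "pend Q p = fst v" and ydef: "y = pmult (pmult u p) v"
    using red unfolding reduces1_def by blast
  define T where "T = Tip lt f"
  obtain eu bu where u: "u = (eu, bu)" by (cases u)
  obtain eT bT where T: "T = (eT, bT)" by (cases T)
  obtain ev bv where v: "v = (ev, bv)" by (cases v)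
  obtain ep bp where p: "p = (ep, bp)" by (cases p)
  have x: "x = (eu, bu @ bT @ bv)" using xdef unfolding T_def[symmetric] u T v pmult_def by simp
  have y: "y = (eu, bu @ bp @ bv)" using ydef unfolding u p v pmult_def by simp
  have eu: "eu = pend Q (e, A)" using fx x by simp
  have pp: "p \<in> paths Q" using ps ideal_kQ[OF id fI] unfolding kQ_def by blast
  have Xs: "(e, (A @ bu) @ bT @ bv @ B) \<in> paths Q" using X x by simp
  have pAu: "(e, A @ bu) \<in> paths Q" using paths_app[OF fq, of e "A @ bu" "bT @ bv @ B"] Xs by simp
  have peAu: "pend Q (e, A @ bu) = pend Q u" using pend_app[of Q e A bu] eu u by simp
  have Xs2: "(e, (A @ bu @ bT) @ bv @ B) \<in> paths Q" using X x by simp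
  have peAuT: "pend Q (e, A @ bu @ bT) = fst v"
  proof -
    have "pend Q (e, A @ bu @ bT) = pend Q (pend Q (e, A @ bu), bT)" using pend_app[of Q e "A @ bu" bT] by simp
    also have "\<dots> = pend Q (eT, bT)" using peAu uT T_def T by (metis fst_conv)
    also have "\<dots> = pend Q T" using T by simp
    finally show ?thesis using Tv T_def by simp
  qed
  have vB: "(ev, bv @ B) \<in> paths Q"
    using paths_app[OF fq, of e "A @ bu @ bT" "bv @ B"] Xs2 peAuT v by simp
  have pAup: "(e, A @ bu @ bp) \<in> paths Q"
  proof -
    have "(pend Q (e, A @ bu), bp) \<in> paths Q" using peAu up' pp p by simp
    then show ?thesis using paths_app[OF fq, of e "A @ bu" bp] pAu by simp
  qed
  have peAup: "pend Q (e, A @ bu @ bp) = ev"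
  proof -
    have "pend Q (e, A @ bu @ bp) = pend Q (pend Q (e, A @ bu), bp)" using pend_app[of Q e "A @ bu" bp] by simp
    also have "\<dots> = pend Q p" using peAu up' p by simp
    finally show ?thesis using pv v by simp
  qed
  have Y: "(e, A @ bu @ bp @ bv @ B) \<in> paths Q"
    using paths_app[OF fq, of e "A @ bu @ bp" "bv @ B"] pAup peAup vB by simp
  show ?thesis
  proof (rule reduces1_intro[where u="(e, A @ bu)" and v="(ev, bv @ B)" and f=f and p=p])
    show "(e, A @ snd x @ B) \<in> paths Q" by (rule X)
    show "(e, A @ snd y @ B) \<in> paths Q" using Y y by simp
    show "(e, A @ bu) \<in> paths Q" by (rule pAu)
    show "(ev, bv @ B) \<in> paths Q" by (rule vB)
    show "f \<in> I" by (rule fI)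
    show "f \<noteq> (\<lambda>_. 0)" by (rule fnz)
    show "Tip lt f \<in> W" by (rule fW)
    show "pend Q (e, A @ bu) = fst (Tip lt f)" using peAu uT by simp
    show "pend Q (Tip lt f) = fst (ev, bv @ B)" using Tv v by simp
    show "(e, A @ snd x @ B) = pmult (pmult (e, A @ bu) (Tip lt f)) (ev, bv @ B)"
    proof -
      have sT: "snd (Tip lt f) = bT" using T_def T by (metis snd_conv)
      show ?thesis using x sT unfolding pmult_def by simp
    qed
    show "p \<in> supp f" by (rule ps)
    show "p \<noteq> Tip lt f" by (rule pT)
    show "pend Q (e, A @ bu) = fst p" using peAu up' by simp
    show "pend Q p = fst (ev, bv @ B)" using pv v by simp
    show "(e, A @ snd y @ B) = pmult (pmult (e, A @ bu) p) (ev, bv @ B)"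
      using y p unfolding pmult_def by simp
  qed
qed

lemma lift:
  fixes I :: "(('v,'a) path \<Rightarrow> 'k::field) set"
  assumes fq: "finite_quiver Q" and id: "two_sided_ideal Q I"
    and cv: "converges Q lt I W x y" and X: "(e, A @ snd x @ B) \<in> paths Q" and fx: "fst x = pend Q (e, A)"
  shows "converges Q lt I W (e, A @ snd x @ B) (e, A @ snd y @ B)"
  using cv[unfolded converges_def]
proof (induction rule: tranclp_induct)
  case (base y)
  then show ?case unfolding converges_def using lift1[OF fq id base X fx] by simp
next
  case (step y z)
  have Yp: "(e, A @ snd y @ B) \<in> paths Q" using step.IH unfolding converges_def
    by (metis (no_types, lifting) reduces1_def tranclpD tranclp.cases)
  have "fst y = fst x"
  proof -
    have "\<And>a b. (reduces1 Q lt I W)\<^sup>+\<^sup>+ a b \<Longrightarrow> fst b = fst a"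
    proof -
      fix a b assume "(reduces1 Q lt I W)\<^sup>+\<^sup>+ a b"
      then show "fst b = fst a" by (induction rule: tranclp_induct) (auto dest: reduces1_fst_pend)
    qed
    then show ?thesis using step.hyps(1) by blast
  qed
  then have fy: "fst y = pend Q (e, A)" using fx by simp
  have "reduces1 Q lt I W (e, A @ snd y @ B) (e, A @ snd z @ B)" by (rule lift1[OF fq id step.hyps(2) Yp fy])
  then show ?case using step.IH unfolding converges_def by (meson tranclp.trancl_into_trancl)
qed

lemma dotted_prod:
  assumes "(s, i, t) \<in> matching Q lt I W"
  shows "seq_prod s = seq_prod t"
proof -
  define m where "m = chainlen Q lt I W t"
  obtain w' w'' where m: "m < length (snd t)" and ww: "pmult w' w'' = snd t ! m"
    and sdef: "s = (fst t, take m (snd t) @ [w', w''] @ drop (Suc m) (snd t))"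
    using assms unfolding matching_def Let_def m_def by blast
  let ?L = "snd t"
  have L: "?L = take m ?L @ (?L ! m) # drop (Suc m) ?L" using m by (simp add: id_take_nth_drop)
  have sm: "snd (?L ! m) = snd w' @ snd w''" using ww unfolding pmult_def by (metis snd_conv)
  have "concat (map snd ?L) = concat (map snd (take m ?L)) @ snd (?L ! m) @ concat (map snd (drop (Suc m) ?L))"
    by (subst L) simp
  then show ?thesis unfolding seq_prod_def sdef using sm by simp
qed

lemma middle_prod:
  fixes I :: "(('v,'a) path \<Rightarrow> 'k::field) set"
  assumes fq: "finite_quiver Q" and adm: "admissible_order Q lt" and id: "two_sided_ideal Q I"
    and gsb: "reduced_GSB Q lt I G"
    and x: "(s, i, t) \<in> barrows Q lt I" and i0: "i \<noteq> 0" and il: "i \<noteq> length (snd s)"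
  shows "seq_prod t = seq_prod s \<or> converges Q lt I (Tip lt ` G) (seq_prod s) (seq_prod t)"
proof -
  obtain e ws where sdef: "s = (e, ws)" by (cases s)
  have sb: "s \<in> bverts Q lt I" and mid: "1 \<le> i \<and> i < length ws \<and>
        (\<exists>u. u \<in> supp (NF Q lt I (pelem (pmult (ws ! (i - 1)) (ws ! i)) :: _ \<Rightarrow> 'k))
             \<and> plen u > 0 \<and> t = (e, take (i - 1) ws @ [u] @ drop (Suc i) ws))"
    using x i0 il unfolding barrows_def sdef by auto
  then obtain u where i1: "1 \<le> i" and il': "i < length ws"
    and us: "u \<in> supp (NF Q lt I (pelem (pmult (ws ! (i - 1)) (ws ! i)) :: _ \<Rightarrow> 'k))"
    and tdef: "t = (e, take (i - 1) ws @ [u] @ drop (Suc i) ws)" by blast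
  have ev: "e \<in> verts Q" and wsp: "\<forall>w\<in>set ws. w \<in> NonTip Q lt I \<and> plen w > 0"
    and sc: "seq_comp Q e ws" using sb unfolding bverts_def sdef by auto
  have wsp': "\<forall>w\<in>set ws. w \<in> paths Q" using wsp unfolding NonTip_def by auto
  define a where "a = ws ! (i - 1)"
  define b where "b = ws ! i"
  define L1 where "L1 = take (i - 1) ws"
  define L2 where "L2 = drop (Suc i) ws"
  have wsd: "ws = L1 @ [a, b] @ L2"
  proof -
    have "ws = take (i - 1) ws @ ws ! (i - 1) # drop (Suc (i - 1)) ws" using il' by (simp add: id_take_nth_drop)
    moreover have "drop (Suc (i - 1)) ws = ws ! i # drop (Suc i) ws" using i1 il' by (simp add: Cons_nth_drop_Suc)
    ultimately show ?thesis unfolding L1_def L2_def a_def b_def by simp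
  qed
  define A where "A = concat (map snd L1)"
  define B where "B = concat (map snd L2)"
  have sc2: "seq_comp Q (pend Q (e, A)) ([a, b] @ L2)"
    using sc seq_comp_append[of Q e L1 "[a, b] @ L2"] wsd unfolding A_def by simp
  have fa: "fst a = pend Q (e, A)" and fb: "fst b = pend Q a" using sc2 by auto
  have ap: "a \<in> paths Q" and bp: "b \<in> paths Q" using wsp' wsd by auto
  define p0 where "p0 = pmult a b"
  have p0p: "p0 \<in> paths Q"
  proof -
    have "(fst a, snd a) \<in> paths Q" using ap by simp
    moreover have "(pend Q (fst a, snd a), snd b) \<in> paths Q" using bp fb by (metis prod.collapse)
    ultimately show ?thesis unfolding p0_def pmult_def using paths_app[OF fq, of "fst a" "snd a" "snd b"] by simp
  qed
  have sp: "seq_prod s = (e, A @ snd p0 @ B)"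
    unfolding seq_prod_def sdef A_def B_def p0_def pmult_def using wsd by simp
  have tp: "seq_prod t = (e, A @ snd u @ B)"
    unfolding seq_prod_def tdef A_def B_def L1_def L2_def by simp
  have Sp: "(e, A @ snd p0 @ B) \<in> paths Q" using seq_comp_paths[OF fq ev wsp' sc] sp unfolding seq_prod_def sdef by simp
  have "u = p0 \<or> converges Q lt I (Tip lt ` G) p0 u"
    using NF_supp_pelem[OF fq adm id gsb p0p] us unfolding p0_def a_def b_def by blast
  then show ?thesis
  proof
    assume "u = p0" then show ?thesis using sp tp by simp
  next
    assume cv: "converges Q lt I (Tip lt ` G) p0 u"
    have "fst p0 = pend Q (e, A)" using fa unfolding p0_def pmult_def by simp
    then show ?thesis using lift[OF fq id cv Sp] sp tp by simp
  qed
qed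

section \<open>Uniqueness of chain decompositions\<close>

lemma steps_Cons:
  "(\<forall>j. Suc j < length (x # ys) \<longrightarrow> E ((x # ys) ! j) ((x # ys) ! Suc j)) =
   ((ys \<noteq> [] \<longrightarrow> E x (hd ys)) \<and> (\<forall>j. Suc j < length ys \<longrightarrow> E (ys ! j) (ys ! Suc j)))"
proof
  assume h: "\<forall>j. Suc j < length (x # ys) \<longrightarrow> E ((x # ys) ! j) ((x # ys) ! Suc j)"
  have "ys \<noteq> [] \<longrightarrow> E x (hd ys)" using h[rule_format, of 0] by (cases ys) auto
  moreover have "\<forall>j. Suc j < length ys \<longrightarrow> E (ys ! j) (ys ! Suc j)"
    using h by (metis Suc_less_eq length_Cons nth_Cons_Suc)
  ultimately show "(ys \<noteq> [] \<longrightarrow> E x (hd ys)) \<and> (\<forall>j. Suc j < length ys \<longrightarrow> E (ys ! j) (ys ! Suc j))" by blast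
next
  assume h: "(ys \<noteq> [] \<longrightarrow> E x (hd ys)) \<and> (\<forall>j. Suc j < length ys \<longrightarrow> E (ys ! j) (ys ! Suc j))"
  show "\<forall>j. Suc j < length (x # ys) \<longrightarrow> E ((x # ys) ! j) ((x # ys) ! Suc j)"
  proof (intro allI impI)
    fix j assume j: "Suc j < length (x # ys)"
    show "E ((x # ys) ! j) ((x # ys) ! Suc j)"
    proof (cases j)
      case 0 then show ?thesis using h j by (cases ys) auto
    next
      case (Suc j') then show ?thesis using h j by auto
    qed
  qed
qed

lemma in_tip_ideal_paths: "in_tip_ideal Q lt I w \<Longrightarrow> w \<in> paths Q"
  unfolding in_tip_ideal_def is_factor_def by blast

lemma chain_step_unique:
  assumes fq: "finite_quiver Q" and ea: "uf_edge Q lt I W x a" and eb: "uf_edge Q lt I W x b"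
    and r: "snd b = snd a @ r" "r \<noteq> []"
  shows False
proof -
  have xb: "pmult x b \<in> paths Q" using eb in_tip_ideal_paths unfolding uf_edge_def by blast
  have ta: "in_tip_ideal Q lt I (pmult x a)" using ea unfolding uf_edge_def by blast
  have nb: "\<not> (\<exists>p. is_left_factor Q p (pmult x b) \<and> p \<noteq> pmult x b \<and> in_tip_ideal Q lt I p)"
    using eb unfolding uf_edge_def by blast
  have xb': "(fst x, (snd x @ snd a) @ r) \<in> paths Q" using xb r unfolding pmult_def by simp
  have xa: "pmult x a \<in> paths Q" and vp: "(pend Q (pmult x a), r) \<in> paths Q"
    using paths_app[OF fq, of "fst x" "snd x @ snd a" r] xb' unfolding pmult_def by auto
  have "is_left_factor Q (pmult x a) (pmult x b)"
    unfolding is_left_factor_def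
    using xa xb vp r unfolding pmult_def by auto
  moreover have "pmult x a \<noteq> pmult x b" using r unfolding pmult_def by simp
  ultimately show False using nb ta by blast
qed

lemma plen_pos_snd: "plen v > 0 \<Longrightarrow> snd v \<noteq> []"
  unfolding plen_def by auto

lemma chain_det:
  assumes fq: "finite_quiver Q"
  shows "xs \<noteq> [] \<Longrightarrow> ys \<noteq> [] \<Longrightarrow> hd xs = hd ys \<Longrightarrow>
    (\<forall>v\<in>set xs. plen v > 0) \<Longrightarrow> (\<forall>v\<in>set ys. plen v > 0) \<Longrightarrow>
    (\<forall>j. Suc j < length xs \<longrightarrow> uf_edge Q lt I W (xs ! j) (xs ! Suc j)) \<Longrightarrow>
    (\<forall>j. Suc j < length ys \<longrightarrow> uf_edge Q lt I W (ys ! j) (ys ! Suc j)) \<Longrightarrow>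
    concat (map snd xs) = concat (map snd ys) \<Longrightarrow> xs = ys"
proof (induction xs arbitrary: ys)
  case Nil then show ?case by simp
next
  case (Cons x xs')
  obtain y ys' where ys: "ys = y # ys'" using Cons.prems(2) by (cases ys) auto
  have xy: "x = y" using Cons.prems(3) ys by simp
  have sx: "(xs' \<noteq> [] \<longrightarrow> uf_edge Q lt I W x (hd xs')) \<and>
      (\<forall>j. Suc j < length xs' \<longrightarrow> uf_edge Q lt I W (xs' ! j) (xs' ! Suc j))"
    using Cons.prems(6) steps_Cons[where E="uf_edge Q lt I W" and x=x and ys=xs'] by simp
  have sy: "(ys' \<noteq> [] \<longrightarrow> uf_edge Q lt I W x (hd ys')) \<and>
      (\<forall>j. Suc j < length ys' \<longrightarrow> uf_edge Q lt I W (ys' ! j) (ys' ! Suc j))"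
    using Cons.prems(7) steps_Cons[where E="uf_edge Q lt I W" and x=y and ys=ys'] xy ys by simp
  have cc: "concat (map snd xs') = concat (map snd ys')" using Cons.prems(8) ys xy by simp
  have px: "\<forall>v\<in>set xs'. plen v > 0" and py: "\<forall>v\<in>set ys'. plen v > 0"
    using Cons.prems(4,5) ys by auto
  show ?case
  proof (cases "xs' = []")
    case True
    then have "concat (map snd ys') = []" using cc by simp
    then have "ys' = []" using py by (cases ys') (auto simp: plen_def)
    then show ?thesis using True ys xy by simp
  next
    case False
    note xne = False
    show ?thesis
    proof (cases "ys' = []")
      case True
      then have "concat (map snd xs') = []" using cc by simp
      then have "xs' = []" using px by (cases xs') (auto simp: plen_def)
      then show ?thesis using xne by simp
    next
      case False
      note yne = False
      obtain a xt where xa: "xs' = a # xt" using xne by (cases xs') auto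
      obtain b yt where yb: "ys' = b # yt" using yne by (cases ys') auto
      have ea: "uf_edge Q lt I W x a" using sx xa by simp
      have eb: "uf_edge Q lt I W x b" using sy yb by simp
      have "snd a @ concat (map snd xt) = snd b @ concat (map snd yt)" using cc xa yb by simp
      then obtain us where "(snd a = snd b @ us \<and> us @ concat (map snd xt) = concat (map snd yt)) \<or>
          (snd a @ us = snd b \<and> concat (map snd xt) = us @ concat (map snd yt))"
        unfolding append_eq_append_conv2 by blast
      then have "snd a = snd b"
      proof
        assume h: "snd a = snd b @ us \<and> us @ concat (map snd xt) = concat (map snd yt)"
        show ?thesis
        proof (cases "us = []")
          case True then show ?thesis using h by simp
        next
          case False then show ?thesis using chain_step_unique[OF fq eb ea] h by blast
        qed
      next
        assume h: "snd a @ us = snd b \<and> concat (map snd xt) = us @ concat (map snd yt)"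
        show ?thesis
        proof (cases "us = []")
          case True then show ?thesis using h by simp
        next
          case False then show ?thesis using chain_step_unique[OF fq ea eb] h by metis
        qed
      qed
      moreover have "fst a = fst b" using ea eb unfolding uf_edge_def by simp
      ultimately have ab: "a = b" by (simp add: prod_eq_iff)
      have "xs' = ys'"
        using Cons.IH[of ys'] xne yne ab xa yb px py sx sy cc by simp
      then show ?thesis using ys xy by simp
    qed
  qed
qed

lemma chain_unique:
  assumes fq: "finite_quiver Q" and c1: "is_chain Q lt I W vs" and c2: "is_chain Q lt I W vs'"
    and cc: "concat (map snd vs) = concat (map snd vs')"
  shows "vs = vs'"
proof -
  have ne: "vs \<noteq> []" "vs' \<noteq> []" using c1 c2 unfolding is_chain_def by auto
  obtain a where ha: "hd vs = apath Q a" using c1 unfolding is_chain_def by blast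
  obtain a' where ha': "hd vs' = apath Q a'" using c2 unfolding is_chain_def by blast
  have "concat (map snd vs) = a # concat (map snd (tl vs))"
    using ne(1) ha unfolding apath_def by (cases vs) auto
  moreover have "concat (map snd vs') = a' # concat (map snd (tl vs'))"
    using ne(2) ha' unfolding apath_def by (cases vs') auto
  ultimately have "a = a'" using cc by simp
  then have hh: "hd vs = hd vs'" using ha ha' by simp
  show ?thesis
    by (rule chain_det[OF fq ne(1) ne(2) hh])
       (use c1 c2 cc in \<open>auto simp: is_chain_def\<close>)
qed

lemma gens_prod_neq:
  assumes fq: "finite_quiver Q" and n1: "n \<ge> 1" and c: "c \<in> anick_gens Q lt I W n"
    and c': "c' \<in> anick_gens Q lt I W (n - 1)"
  shows "seq_prod c \<noteq> seq_prod c'"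
proof
  assume eq: "seq_prod c = seq_prod c'"
  obtain ws where cd: "c = (fst (hd ws), ws)" and wc: "is_chain Q lt I W ws" and wl: "length ws = n"
    using c n1 unfolding anick_gens_def by auto
  have cne: "concat (map snd ws) \<noteq> []"
  proof -
    obtain a where "hd ws = apath Q a" "ws \<noteq> []" using wc unfolding is_chain_def by blast
    then show ?thesis unfolding apath_def by (cases ws) auto
  qed
  show False
  proof (cases "n - 1 = 0")
    case True
    then obtain e where "c' = (e, [])" using c' unfolding anick_gens_def by auto
    then show False using eq cne cd unfolding seq_prod_def by simp
  next
    case False
    then obtain ws' where cd': "c' = (fst (hd ws'), ws')" and wc': "is_chain Q lt I W ws'"
      and wl': "length ws' = n - 1"
      using c' unfolding anick_gens_def by auto
    have "concat (map snd ws) = concat (map snd ws')" using eq cd cd' unfolding seq_prod_def by simp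
    then have "ws = ws'" using chain_unique[OF fq wc wc'] by simp
    then show False using wl wl' False by simp
  qed
qed

lemma mw_kQ:
  fixes I :: "(('v,'a) path \<Rightarrow> 'k::field) set"
  assumes fq: "finite_quiver Q" and x: "fst x \<longrightarrow> snd x \<in> barrows Q lt I"
  shows "fst (medge_weight Q lt I x) \<in> kQ Q \<and> snd (medge_weight Q lt I x) \<in> kQ Q"
proof -
  obtain b s i t where xd: "x = (b, (s, i, t))" by (cases x) auto
  have ak: "(aone Q :: _ \<Rightarrow> 'k) \<in> kQ Q" by (rule aone_kQ[OF fq])
  show ?thesis
  proof (cases b)
    case False
    have "(\<lambda>p. - inverse (mid_scalar Q lt I (s, i, t)) * aone Q p) \<in> kQ Q" by (rule kQ_smult[OF ak])
    then show ?thesis unfolding xd medge_weight_def using ak False by simp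
  next
    case True
    then have xb: "(s, i, t) \<in> barrows Q lt I" using x xd by simp
    then have sb: "s \<in> bverts Q lt I" and sne: "snd s \<noteq> []" unfolding barrows_def by auto
    have wp: "\<forall>w\<in>set (snd s). w \<in> paths Q" using sb unfolding bverts_def NonTip_def by auto
    have hp: "hd (snd s) \<in> paths Q" and lp: "last (snd s) \<in> paths Q" using wp sne by auto
    have k1: "(pelem (hd (snd s)) :: _ \<Rightarrow> 'k) \<in> kQ Q" by (rule pelem_kQ[OF hp])
    have k2: "(pelem (last (snd s)) :: _ \<Rightarrow> 'k) \<in> kQ Q" by (rule pelem_kQ[OF lp])
    show ?thesis unfolding xd medge_weight_def bweight_def
      using True ak k1 k2 kQ_smult[OF ak] by simp
  qed
qed

lemma zigzag_rel:
  fixes I :: "(('v,'a) path \<Rightarrow> 'k::field) set"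
  assumes fq: "finite_quiver Q" and adm: "admissible_order Q lt" and id: "two_sided_ideal Q I"
    and gsb: "reduced_GSB Q lt I G"
    and es: "es \<in> zigzag_paths Q lt I (Tip lt ` G) c c'"
    and mid: "\<forall>j<length es. even j \<longrightarrow> (\<forall>s i t. snd (es ! j) = (s, i, t) \<longrightarrow> i \<noteq> 0 \<and> i \<noteq> length (snd s))"
  shows "seq_prod c = seq_prod c' \<or> converges Q lt I (Tip lt ` G) (seq_prod c) (seq_prod c')"
proof -
  let ?W = "Tip lt ` G"
  define R where "R = (\<lambda>x y. x = y \<or> converges Q lt I ?W x y)"
  have Rt: "R x z" if "R x y" "R y z" for x y z
    using that unfolding R_def converges_def by (auto intro: tranclp_trans)
  have odd: "odd (length es)"
    and cond: "\<forall>j<length es. (even j \<longrightarrow> fst (es ! j) \<and> snd (es ! j) \<in> barrows Q lt I - matching Q lt I ?W) \<and>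
                    (odd j \<longrightarrow> \<not> fst (es ! j) \<and> snd (es ! j) \<in> matching Q lt I ?W)"
    and hs: "medge_src (hd es) = c" and lt': "medge_tgt (last es) = c'"
    and con: "\<forall>j. Suc j < length es \<longrightarrow> medge_tgt (es ! j) = medge_src (es ! Suc j)"
    using es unfolding zigzag_paths_def by auto
  have ne: "es \<noteq> []" using odd by auto
  have edge: "R (seq_prod (medge_src (es ! j))) (seq_prod (medge_tgt (es ! j)))" if j: "j < length es" for j
  proof -
    obtain b s i t where ej: "es ! j = (b, (s, i, t))" by (cases "es ! j") auto
    show ?thesis
    proof (cases "even j")
      case True
      then have b: "b" and xb: "(s, i, t) \<in> barrows Q lt I" using cond j ej by auto
      have "i \<noteq> 0 \<and> i \<noteq> length (snd s)" using mid[rule_format, OF j True, of s i t] ej by simp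
      then have "seq_prod t = seq_prod s \<or> converges Q lt I ?W (seq_prod s) (seq_prod t)"
        using middle_prod[OF fq adm id gsb xb] by blast
      then show ?thesis unfolding R_def ej medge_src_def medge_tgt_def using b by auto
    next
      case False
      then have b: "\<not> b" and xm: "(s, i, t) \<in> matching Q lt I ?W" using cond j ej by auto
      have "seq_prod s = seq_prod t" by (rule dotted_prod[OF xm])
      then show ?thesis unfolding R_def ej medge_src_def medge_tgt_def using b by auto
    qed
  qed
  have all: "k < length es \<longrightarrow> R (seq_prod c) (seq_prod (medge_tgt (es ! k)))" for k
  proof (induction k)
    case 0
    have "medge_src (es ! 0) = c" using hs ne by (simp add: hd_conv_nth)
    moreover have "0 < length es" using ne by simp
    ultimately show ?case using edge[of 0] by simp
  next
    case (Suc k)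
    show ?case
    proof
      assume k: "Suc k < length es"
      have "R (seq_prod c) (seq_prod (medge_tgt (es ! k)))" using Suc.IH k by simp
      moreover have "medge_tgt (es ! k) = medge_src (es ! Suc k)" using con k by simp
      ultimately have r1: "R (seq_prod c) (seq_prod (medge_src (es ! Suc k)))" by simp
      have e: "R (seq_prod (medge_src (es ! Suc k))) (seq_prod (medge_tgt (es ! Suc k)))" by (rule edge[OF k])
      show "R (seq_prod c) (seq_prod (medge_tgt (es ! Suc k)))" by (rule Rt[OF r1 e])
    qed
  qed
  have "last es = es ! (length es - 1)" using ne by (simp add: last_conv_nth)
  then have "R (seq_prod c) (seq_prod c')" using all[of "length es - 1"] lt' ne by simp
  then show ?thesis unfolding R_def .
qed

theorem theorem5p4:
  fixes Q :: "('v, 'a) quiver"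
    and lt :: "('v, 'a) path \<Rightarrow> ('v, 'a) path \<Rightarrow> bool"
    and I :: "(('v, 'a) path \<Rightarrow> 'k::field) set"
    and G :: "(('v, 'a) path \<Rightarrow> 'k) set"
  assumes "finite_quiver Q"
    and "admissible_order Q lt"
    and "two_sided_ideal Q I"
    and "ideal_in_len2 I"
    and "reduced_GSB Q lt I G"
    and "\<forall>n\<ge>1. \<forall>c\<in>anick_gens Q lt I (Tip lt ` G) n.
           \<forall>c'\<in>anick_gens Q lt I (Tip lt ` G) (n - 1).
             \<not> converges Q lt I (Tip lt ` G) (seq_prod c) (seq_prod c')"
  shows "anick_minimal Q lt I (Tip lt ` G)"
proof -
  let ?W = "Tip lt ` G"
  have fq: "finite_quiver Q" and adm: "admissible_order Q lt" and id: "two_sided_ideal Q I"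
    and l2: "ideal_in_len2 I" and gsb: "reduced_GSB Q lt I G" using assms(1-5) by auto
  note hyp = assms(6)
  show ?thesis unfolding anick_minimal_def
  proof (intro allI impI ballI)
    fix n c c' assume n1: "n \<ge> 1" and c: "c \<in> anick_gens Q lt I ?W n"
      and c': "c' \<in> anick_gens Q lt I ?W (n - 1)"
    show "(\<Sum>es\<in>zigzag_paths Q lt I ?W c c'.
            fst (path_weight Q lt I es) (vpath (fst c')) *
            snd (path_weight Q lt I es) (vpath (seq_end Q c'))) = 0"
    proof (rule sum.neutral, rule ballI)
      fix es assume es: "es \<in> zigzag_paths Q lt I ?W c c'"
      have cond: "\<forall>j<length es. (even j \<longrightarrow> fst (es ! j) \<and> snd (es ! j) \<in> barrows Q lt I - matching Q lt I ?W) \<and>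
                    (odd j \<longrightarrow> \<not> fst (es ! j) \<and> snd (es ! j) \<in> matching Q lt I ?W)"
        using es unfolding zigzag_paths_def by blast
      have kq: "\<forall>x\<in>set es. fst (medge_weight Q lt I x) \<in> kQ Q \<and> snd (medge_weight Q lt I x) \<in> kQ Q"
      proof
        fix x assume "x \<in> set es"
        then obtain j where j: "j < length es" and xj: "x = es ! j" by (auto simp: in_set_conv_nth)
        have "fst x \<longrightarrow> snd x \<in> barrows Q lt I"
        proof
          assume fx: "fst x"
          then have "even j" using cond j xj by auto
          then show "snd x \<in> barrows Q lt I" using cond j xj by auto
        qed
        then show "fst (medge_weight Q lt I x) \<in> kQ Q \<and> snd (medge_weight Q lt I x) \<in> kQ Q"
          by (rule mw_kQ[OF fq])
      qed
      have pw: "fst (path_weight Q lt I es) \<in> kQ Q \<and> snd (path_weight Q lt I es) \<in> kQ Q \<and>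
        ((\<exists>x\<in>set es. fst (medge_weight Q lt I x) (fst c', []) = 0) \<longrightarrow> fst (path_weight Q lt I es) (fst c', []) = 0) \<and>
        ((\<exists>x\<in>set es. snd (medge_weight Q lt I x) (seq_end Q c', []) = 0) \<longrightarrow> snd (path_weight Q lt I es) (seq_end Q c', []) = 0)"
        by (rule pw_vertex[OF fq adm id gsb l2 kq])
      have pw1: "(\<exists>x\<in>set es. fst (medge_weight Q lt I x) (fst c', []) = 0) \<longrightarrow> fst (path_weight Q lt I es) (fst c', []) = 0"
        using pw by (rule conjunct1[OF conjunct2[OF conjunct2]])
      have pw2: "(\<exists>x\<in>set es. snd (medge_weight Q lt I x) (seq_end Q c', []) = 0) \<longrightarrow> snd (path_weight Q lt I es) (seq_end Q c', []) = 0"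
        using pw by (rule conjunct2[OF conjunct2[OF conjunct2]])
      show "fst (path_weight Q lt I es) (vpath (fst c')) * snd (path_weight Q lt I es) (vpath (seq_end Q c')) = 0"
      proof (cases "\<exists>j<length es. even j \<and> (\<exists>s i t. snd (es ! j) = (s, i, t) \<and> (i = 0 \<or> i = length (snd s)))")
        case True
        then obtain j s i t where j: "j < length es" "even j" and ej: "snd (es ! j) = (s, i, t)"
          and ii: "i = 0 \<or> i = length (snd s)" by blast
        have fj: "fst (es ! j)" and xb: "(s, i, t) \<in> barrows Q lt I" using cond j ej by auto
        have mwj: "medge_weight Q lt I (es ! j) = bweight Q lt I (s, i, t)"
          unfolding medge_weight_def using fj ej by simp
        have sb: "s \<in> bverts Q lt I" and sne: "snd s \<noteq> []" using xb unfolding barrows_def by auto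
        have pos: "\<forall>w\<in>set (snd s). plen w > 0" using sb unfolding bverts_def by auto
        have h0: "hd (snd s) \<noteq> (e, [])" for e
        proof
          assume "hd (snd s) = (e, [])"
          moreover have "plen (hd (snd s)) > 0" using pos sne by simp
          ultimately show False unfolding plen_def by simp
        qed
        have l0: "last (snd s) \<noteq> (e, [])" for e
        proof
          assume "last (snd s) = (e, [])"
          moreover have "plen (last (snd s)) > 0" using pos sne by simp
          ultimately show False unfolding plen_def by simp
        qed
        have mem: "es ! j \<in> set es" using j by simp
        show ?thesis
        proof (cases "i = 0")
          case True
          have "fst (medge_weight Q lt I (es ! j)) (fst c', []) = 0"
            unfolding mwj bweight_def using True h0[of "fst c'"] by (simp add: pelem_def)
          then have "fst (path_weight Q lt I es) (fst c', []) = 0" using pw1 mem by blast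
          then show ?thesis unfolding vpath_def by simp
        next
          case False
          then have il: "i = length (snd s)" using ii by simp
          have "snd (medge_weight Q lt I (es ! j)) (seq_end Q c', []) = 0"
            unfolding mwj bweight_def using False il l0[of "seq_end Q c'"] by (simp add: pelem_def)
          then have "snd (path_weight Q lt I es) (seq_end Q c', []) = 0" using pw2 mem by blast
          then show ?thesis unfolding vpath_def by simp
        qed
      next
        case False
        note nf = False
        have mid: "\<forall>j<length es. even j \<longrightarrow> (\<forall>s i t. snd (es ! j) = (s, i, t) \<longrightarrow> i \<noteq> 0 \<and> i \<noteq> length (snd s))"
        proof (intro allI impI)
          fix j s i t assume j: "j < length es" and ev: "even j" and ej: "snd (es ! j) = (s, i, t)"
          show "i \<noteq> 0 \<and> i \<noteq> length (snd s)"
          proof (rule ccontr)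
            assume "\<not> (i \<noteq> 0 \<and> i \<noteq> length (snd s))"
            then have "i = 0 \<or> i = length (snd s)" by simp
            then have "\<exists>j<length es. even j \<and> (\<exists>s i t. snd (es ! j) = (s, i, t) \<and> (i = 0 \<or> i = length (snd s)))"
              using j ev ej by blast
            then show False using nf by simp
          qed
        qed
        have "seq_prod c = seq_prod c' \<or> converges Q lt I ?W (seq_prod c) (seq_prod c')"
          by (rule zigzag_rel[OF fq adm id gsb es mid])
        moreover have "\<not> converges Q lt I ?W (seq_prod c) (seq_prod c')"
          using hyp[rule_format, OF n1 c c'] .
        moreover have "seq_prod c \<noteq> seq_prod c'" by (rule gens_prod_neq[OF fq n1 c c'])
        ultimately show ?thesis by blast
      qed
    qed
  qed
qed

end
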